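(* Let $\gamma\in\mathbb{C}$ with $\Re\gamma>0$, $\Im\gamma<0$, and let $N>|\gamma|/\pi$ be an integer. If $0<\Re z<1$, then \[ T_N\left(z-\frac{\gamma}{2N}\right)-T_N\left(z+\frac{\gamma}{2N}\right)=\mathcal{L}_1(z). \]
   Context: $T_N(z):=\frac14\int_{\mathcal{R}}\frac{e^{(2z-1)x}}{x\sinh(x)\sinh(\gamma x/N)}dx$ for $-\frac{\Re\gamma}{2N}<\Re z<1+\frac{\Re\gamma}{2N}$, where $\mathcal{R}:=(-\infty,-1]\cup\{|w|=1,\Im w\ge0\}\cup[1,\infty)$ oriented from $-\infty$ to $\infty$. On $\mathbb{C}\setminus((-\infty,0]\cup[1,\infty))$, $\mathcal{L}_1(z):=\log(1-e^{2\pi iz})$ if $\Im z\ge0$ and $\mathcal{L}_1(z):=\pi i(2z-1)+\log(1-e^{-2\pi iz})$ if $\Im z<0$, with principal $\log$ (cut $(-\infty,0]$). *)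

theory Defs
  imports "HOL-Complex_Analysis.Complex_Analysis"
begin

definition TN_integrand :: "nat \<Rightarrow> complex \<Rightarrow> complex \<Rightarrow> complex \<Rightarrow> complex" where
  "TN_integrand N \<gamma> z x =
     exp ((2 * z - 1) * x) / (x * sinh x * sinh (\<gamma> * x / of_nat N))"

definition T_N :: "nat \<Rightarrow> complex \<Rightarrow> complex \<Rightarrow> complex" where
  "T_N N \<gamma> z = (1/4) *
     (integral {..-1} (\<lambda>x::real. TN_integrand N \<gamma> z (of_real x))
      + contour_integral (part_circlepath 0 1 pi 0) (TN_integrand N \<gamma> z)
      + integral {1..} (\<lambda>x::real. TN_integrand N \<gamma> z (of_real x)))"

definition L1 :: "complex \<Rightarrow> complex" where
  "L1 z = (if Im z \<ge> 0 then Ln (1 - exp (2 * pi * \<i> * z))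
           else pi * \<i> * (2 * z - 1) + Ln (1 - exp (- 2 * pi * \<i> * z)))"

end

theory Submission
  imports Defs "HOL-Real_Asymp.Real_Asymp"
begin

lemma Re_sinh_c: "Re (sinh (x::complex)) = sinh (Re x) * cos (Im x)"
  by (simp add: sinh_def Re_exp scaleR_conv_of_real field_simps)

lemma Im_sinh_c: "Im (sinh (x::complex)) = cosh (Re x) * sin (Im x)"
  by (simp add: sinh_def cosh_def Im_exp scaleR_conv_of_real field_simps)

lemma norm_sinh_sq: "(cmod (sinh (x::complex)))^2 = (sinh (Re x))^2 + (sin (Im x))^2"
proof -
  have "(cmod (sinh x))^2 = (sinh (Re x) * cos (Im x))^2 + (cosh (Re x) * sin (Im x))^2"
    by (simp add: cmod_power2 Re_sinh_c Im_sinh_c)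
  also have "\<dots> = (sinh (Re x))^2 + (sin (Im x))^2"
    by (simp add: power_mult_distrib cosh_square_eq cos_squared_eq algebra_simps)
  finally show ?thesis .
qed

lemma sinh_Re_le: "\<bar>sinh (Re x)\<bar> \<le> cmod (sinh (x::complex))"
proof -
  have "(sinh (Re x))^2 \<le> (cmod (sinh x))^2" by (simp add: norm_sinh_sq)
  then show ?thesis using abs_le_square_iff[of "sinh (Re x)" "cmod (sinh x)"] by simp
qed

lemma sinh_c_eq_0: "sinh (x::complex) = 0 \<longleftrightarrow> Re x = 0 \<and> sin (Im x) = 0"
proof -
  have "sinh x = 0 \<longleftrightarrow> (cmod (sinh x))^2 = 0" by simp
  also have "\<dots> \<longleftrightarrow> sinh (Re x) = 0 \<and> sin (Im x) = 0"
    unfolding norm_sinh_sq by (rule sum_power2_eq_zero_iff)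
  finally show ?thesis by simp
qed

lemma sinh_c_eq_0': "sinh (x::complex) = 0 \<longleftrightarrow> (\<exists>k::int. x = \<i> * (of_int k * pi))"
  unfolding sinh_c_eq_0 sin_zero_iff_int2 by (auto simp: complex_eq_iff)

definition cm :: "int \<Rightarrow> real" where "cm m = pi * (of_int m + 1/2)"

lemma sin_int_pi: "sin (of_int m * pi) = 0"
  using sin_zero_iff_int2 by blast

lemma cos_cm: "cos (cm m) = 0"
proof -
  have "cm m = of_int m * pi + pi/2" by (simp add: cm_def algebra_simps)
  then show ?thesis by (simp add: cos_add sin_int_pi)
qed

lemma sin_cm_sq: "(sin (cm m))^2 = 1"
  using sin_cos_squared_add[of "cm m"] cos_cm[of m] by simp

lemma norm_sinh_line: "cmod (sinh (Complex t (cm m))) = cosh t"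
proof -
  have "(cmod (sinh (Complex t (cm m))))^2 = (cosh t)^2"
    by (simp add: norm_sinh_sq sin_cm_sq cosh_square_eq)
  then show ?thesis
    by (metis cosh_real_nonneg norm_ge_zero power2_eq_iff_nonneg)
qed

lemma cm_abs_ge: "\<bar>cm m\<bar> \<ge> pi/2"
proof -
  have "\<bar>of_int m + 1/2\<bar> \<ge> (1/2::real)"
  proof (cases "m \<ge> 0")
    case True then have "real_of_int m \<ge> 0" by simp
    then show ?thesis by simp
  next
    case False then have "real_of_int m \<le> -1" by simp
    then show ?thesis by simp
  qed
  then have "pi * \<bar>of_int m + 1/2\<bar> \<ge> pi * (1/2)" by (intro mult_left_mono) auto
  then show ?thesis by (simp add: cm_def abs_mult)
qed

lemma cm_nz: "cm m \<noteq> 0"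
proof
  assume "cm m = 0"
  with cm_abs_ge[of m] pi_gt_zero show False by simp
qed

definition gg :: "complex \<Rightarrow> complex \<Rightarrow> complex" where
  "gg w x = exp (w * x) / (x * sinh x)"

lemma norm_exp_mult: "cmod (exp (w * x)) = exp (Re w * Re x - Im w * Im x)"
  by simp

lemma gg_line_bound:
  "cmod (gg w (Complex t (cm m))) \<le> exp (- Im w * cm m) / \<bar>cm m\<bar> * (exp (Re w * t) / cosh t)"
proof -
  let ?x = "Complex t (cm m)"
  have x: "cmod ?x \<ge> \<bar>cm m\<bar>" using abs_Im_le_cmod[of ?x] by simp
  have pos: "\<bar>cm m\<bar> > 0" using cm_nz[of m] by simp
  have "cmod (gg w ?x) = exp (Re w * t - Im w * cm m) / (cmod ?x * cosh t)"
    by (simp add: gg_def norm_divide norm_mult norm_sinh_line)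
  also have "\<dots> \<le> exp (Re w * t - Im w * cm m) / (\<bar>cm m\<bar> * cosh t)"
    using x pos by (intro divide_left_mono mult_right_mono mult_pos_pos) auto
  also have "\<dots> = exp (- Im w * cm m) / \<bar>cm m\<bar> * (exp (Re w * t) / cosh t)"
    by (simp add: exp_add[symmetric] exp_diff field_simps)
  finally show ?thesis .
qed

lemma cosh_ge_exp_abs: "cosh (t::real) \<ge> exp \<bar>t\<bar> / 2"
  by (cases "t \<ge> 0") (auto simp: cosh_def)

lemma exp_cosh_bound:
  fixes a t :: real
  assumes "\<bar>a\<bar> < 1"
  shows "exp (a * t) / cosh t \<le> 2 * exp (-(1 - \<bar>a\<bar>) * \<bar>t\<bar>)"
proof -
  have "exp (a * t) \<le> exp (\<bar>a\<bar> * \<bar>t\<bar>)"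
    using abs_ge_self[of "a*t"] by (simp add: abs_mult)
  moreover have "cosh t \<ge> exp \<bar>t\<bar> / 2" by (rule cosh_ge_exp_abs)
  ultimately have "exp (a * t) / cosh t \<le> exp (\<bar>a\<bar> * \<bar>t\<bar>) / (exp \<bar>t\<bar> / 2)"
    by (intro frac_le) auto
  also have "\<dots> = 2 * exp (-(1 - \<bar>a\<bar>) * \<bar>t\<bar>)"
    by (simp add: exp_diff[symmetric] field_simps exp_add[symmetric])
  finally show ?thesis .
qed


lemma holomorphic_on_sinh' [holomorphic_intros]:
  "f holomorphic_on A \<Longrightarrow> (\<lambda>x. sinh (f x :: complex)) holomorphic_on A"
  unfolding sinh_field_def by (auto intro!: holomorphic_intros)

lemma gg_holo: "gg w holomorphic_on {x. x \<noteq> 0 \<and> sinh x \<noteq> 0}"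
  unfolding gg_def by (auto intro!: holomorphic_intros)

lemma gg_holo_on: "(\<And>x. x \<in> S \<Longrightarrow> x \<noteq> 0 \<and> sinh x \<noteq> 0) \<Longrightarrow> gg w holomorphic_on S"
  by (rule holomorphic_on_subset[OF gg_holo]) auto

lemma gg_cont_on: "(\<And>x. x \<in> S \<Longrightarrow> x \<noteq> 0 \<and> sinh x \<noteq> 0) \<Longrightarrow> continuous_on S (gg w)"
  by (intro holomorphic_on_imp_continuous_on gg_holo_on)

lemma cont_Complex_line: "continuous_on A (\<lambda>t. Complex t c)"
  unfolding Complex_eq by (intro continuous_intros)

lemma exp_pos_integrable_atMost:
  assumes "(d::real) > 0"
  shows "(\<lambda>t. exp (d * t)) integrable_on {..c}"
proof -
  have "(\<lambda>x. exp (-d*x)) absolutely_integrable_on {-c..}"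
    by (intro nonnegative_absolutely_integrable_1 integrable_on_exp_minus_to_infinity assms) auto
  then have "(\<lambda>x. (\<lambda>y. exp (-d*y)) (-x)) absolutely_integrable_on {..c}"
    using has_absolute_integral_reflect_real[of "{..c}" "{-c..}" "\<lambda>y. exp (-d*y)"
        "integral {-c..} (\<lambda>y. exp (-d*y))"] by force
  then show ?thesis by (simp add: absolutely_integrable_on_def)
qed

lemma exp_abs_integrable_UNIV:
  assumes "(d::real) > 0"
  shows "(\<lambda>t. exp (-d * \<bar>t\<bar>)) integrable_on UNIV"
proof -
  have 1: "(\<lambda>t. exp (-d * \<bar>t\<bar>)) integrable_on {..0}"
    by (rule integrable_eq[OF exp_pos_integrable_atMost[OF assms]]) auto
  have 2: "(\<lambda>t. exp (-d * \<bar>t\<bar>)) integrable_on {0..}"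
    by (rule integrable_eq[OF integrable_on_exp_minus_to_infinity[OF assms]]) auto
  have "{..0::real} \<inter> {0..} = {0}" by auto
  then have n: "negligible ({..0::real} \<inter> {0..})" by simp
  show ?thesis by (rule integrable_Un'[OF 1 2 n]) auto
qed

lemma exp_abs_integrable_ge1:
  assumes "(d::real) > 0"
  shows "(\<lambda>t. exp (-d * \<bar>t\<bar>)) integrable_on {1..}"
  by (rule integrable_eq[OF integrable_on_exp_minus_to_infinity[OF assms]]) auto

lemma exp_abs_integrable_le1:
  assumes "(d::real) > 0"
  shows "(\<lambda>t. exp (-d * \<bar>t\<bar>)) integrable_on {..-1}"
  by (rule integrable_eq[OF exp_pos_integrable_atMost[OF assms]]) auto

lemma int_cmult_real: "f integrable_on S \<Longrightarrow> (\<lambda>x. (c::real) * f x) integrable_on S"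
  using integrable_cmul[of f S c] by simp

lemma integrable_by_bound:
  fixes f :: "real \<Rightarrow> complex"
  assumes "continuous_on S f" "S \<in> sets lebesgue" "b integrable_on S"
     "\<And>x. x \<in> S \<Longrightarrow> cmod (f x) \<le> b x"
  shows "f integrable_on S"
  by (rule measurable_bounded_by_integrable_imp_integrable[OF
        continuous_imp_measurable_on_sets_lebesgue[OF assms(1,2)] assms(3,4,2)])

lemma integrable_by_bound_real:
  fixes f :: "real \<Rightarrow> real"
  assumes "continuous_on S f" "S \<in> sets lebesgue" "b integrable_on S"
     "\<And>x. x \<in> S \<Longrightarrow> \<bar>f x\<bar> \<le> b x"
  shows "f integrable_on S"
  by (rule measurable_bounded_by_integrable_imp_integrable_real[OF
        continuous_imp_measurable_on_sets_lebesgue[OF assms(1,2)] assms(3,4,2)])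

lemma exp_cosh_integrable:
  fixes a :: real assumes "\<bar>a\<bar> < 1"
  shows "(\<lambda>t. exp (a * t) / cosh t) integrable_on UNIV"
proof (rule integrable_by_bound_real)
  show "continuous_on UNIV (\<lambda>t. exp (a * t) / cosh t)"
    by (intro continuous_intros) auto
  show "(\<lambda>t. 2 * exp (-(1 - \<bar>a\<bar>) * \<bar>t\<bar>)) integrable_on UNIV"
    using exp_abs_integrable_UNIV[of "1 - \<bar>a\<bar>"] assms
    by (intro int_cmult_real) auto
  show "\<bar>exp (a * t) / cosh t\<bar> \<le> 2 * exp (- (1 - \<bar>a\<bar>) * \<bar>t\<bar>)" for t
    using exp_cosh_bound[OF assms, of t] by simp
qed auto

lemma line_ok: "Complex t (cm m) \<noteq> 0 \<and> sinh (Complex t (cm m)) \<noteq> 0"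
proof
  show "Complex t (cm m) \<noteq> 0" using cm_nz[of m] by (auto simp: complex_eq_iff)
  have "cmod (sinh (Complex t (cm m))) \<noteq> 0" by (simp add: norm_sinh_line)
  then show "sinh (Complex t (cm m)) \<noteq> 0" by auto
qed

lemma gg_line_cont: "continuous_on UNIV (\<lambda>t. gg w (Complex t (cm m)))"
  by (rule continuous_on_compose2[OF gg_cont_on[of "{x. \<exists>t. x = Complex t (cm m)}"] cont_Complex_line])
     (use line_ok in auto)

lemma gg_line_integrable:
  assumes "\<bar>Re w\<bar> < 1"
  shows "(\<lambda>t. gg w (Complex t (cm m))) integrable_on UNIV"
proof (rule integrable_by_bound[OF gg_line_cont])
  show "(\<lambda>t. exp (- Im w * cm m) / \<bar>cm m\<bar> * (exp (Re w * t) / cosh t)) integrable_on UNIV"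
    by (intro int_cmult_real exp_cosh_integrable assms)
  show "cmod (gg w (Complex t (cm m))) \<le> exp (- Im w * cm m) / \<bar>cm m\<bar> * (exp (Re w * t) / cosh t)" for t
    by (rule gg_line_bound)
qed auto

definition Lc :: "complex \<Rightarrow> real \<Rightarrow> complex" where
  "Lc w c = integral UNIV (\<lambda>t. gg w (Complex t c))"

definition KK :: "real \<Rightarrow> real" where
  "KK a = integral UNIV (\<lambda>t. exp (a * t) / cosh t)"

lemma Lc_bound:
  assumes "\<bar>Re w\<bar> < 1"
  shows "cmod (Lc w (cm m)) \<le> exp (- Im w * cm m) / \<bar>cm m\<bar> * KK (Re w)"
proof -
  have "cmod (Lc w (cm m)) \<le> integral UNIV (\<lambda>t. exp (- Im w * cm m) / \<bar>cm m\<bar> * (exp (Re w * t) / cosh t))"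
    unfolding Lc_def
    by (intro integral_norm_bound_integral gg_line_integrable assms gg_line_bound
        int_cmult_real exp_cosh_integrable)
  also have "\<dots> = exp (- Im w * cm m) / \<bar>cm m\<bar> * KK (Re w)"
    unfolding KK_def by (rule integral_mult_right)
  finally show ?thesis .
qed

lemma sinh_ge_exp4: "(T::real) \<ge> 1 \<Longrightarrow> sinh T \<ge> exp T / 4"
proof -
  assume T: "T \<ge> 1"
  have "exp (2*T) \<ge> 1 + 2*T" by (rule exp_ge_add_one_self)
  then have "exp (2*T) \<ge> 2" using T by linarith
  then have "exp T * exp T \<ge> 2" by (simp add: exp_add[symmetric])
  then have "exp (-T) \<le> exp T / 2" by (simp add: exp_minus field_simps)
  then show ?thesis by (simp add: sinh_def)
qed

lemma gg_vert_bound: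
  assumes "1 \<le> \<bar>Re x\<bar>" "\<bar>Im x\<bar> \<le> Y"
  shows "cmod (gg w x) \<le> 4 * exp (\<bar>Im w\<bar> * Y) * exp ((\<bar>Re w\<bar> - 1) * \<bar>Re x\<bar>)"
proof -
  have e: "cmod (exp (w * x)) \<le> exp (\<bar>Re w\<bar> * \<bar>Re x\<bar> + \<bar>Im w\<bar> * Y)"
  proof -
    have "Re w * Re x - Im w * Im x \<le> \<bar>Re w\<bar> * \<bar>Re x\<bar> + \<bar>Im w\<bar> * \<bar>Im x\<bar>"
      by (metis abs_ge_self abs_ge_minus_self abs_mult add_mono diff_conv_add_uminus)
    also have "\<dots> \<le> \<bar>Re w\<bar> * \<bar>Re x\<bar> + \<bar>Im w\<bar> * Y"
      using assms(2) by (intro add_left_mono mult_left_mono) auto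
    finally show ?thesis by simp
  qed
  have x: "cmod x \<ge> 1" using abs_Re_le_cmod[of x] assms(1) by linarith
  have s: "cmod (sinh x) \<ge> exp \<bar>Re x\<bar> / 4"
    using sinh_Re_le[of x] sinh_ge_exp4[OF assms(1)] by simp
  have "cmod (gg w x) = cmod (exp (w * x)) / (cmod x * cmod (sinh x))"
    by (simp add: gg_def norm_divide norm_mult)
  also have "\<dots> \<le> exp (\<bar>Re w\<bar> * \<bar>Re x\<bar> + \<bar>Im w\<bar> * Y) / (1 * (exp \<bar>Re x\<bar> / 4))"
    using e x s by (intro frac_le mult_mono) auto
  also have "\<dots> = 4 * exp (\<bar>Im w\<bar> * Y) * exp ((\<bar>Re w\<bar> - 1) * \<bar>Re x\<bar>)"
    by (simp add: exp_add[symmetric] exp_diff[symmetric] field_simps)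
  finally show ?thesis .
qed


lemma integral_trunc_limit:
  fixes f :: "real \<Rightarrow> complex"
  assumes "f integrable_on S" "\<not> bounded S"
  shows "(\<lambda>n. integral ({-real n..real n} \<inter> S) f) \<longlonglongrightarrow> integral S f"
proof (rule LIMSEQ_I)
  fix r :: real assume r: "r > 0"
  have hi: "(f has_integral integral S f) S" using assms(1) by blast
  have nc: "\<not> (\<exists>a b. S = cbox a b)" using assms(2) by auto
  obtain B where B: "B > 0" "\<forall>a b. ball 0 B \<subseteq> cbox a b \<longrightarrow>
      (\<exists>z. ((\<lambda>x. if x \<in> S then f x else 0) has_integral z) (cbox a b) \<and> norm (z - integral S f) < r)"
    using has_integral_altD[OF hi nc r] by blast
  obtain N :: nat where N: "real N \<ge> B" using real_arch_simple by blast
  show "\<exists>no. \<forall>n\<ge>no. norm (integral ({-real n..real n} \<inter> S) f - integral S f) < r"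
  proof (intro exI allI impI)
    fix n assume n: "n \<ge> N"
    then have "real n \<ge> B" using N by (meson of_nat_le_iff order_trans)
    then have "ball 0 B \<subseteq> cbox (-real n) (real n)" by (auto simp: dist_real_def)
    then obtain z where z: "((\<lambda>x. if x \<in> S then f x else 0) has_integral z) (cbox (-real n) (real n))"
        "norm (z - integral S f) < r" using B by blast
    have "z = integral {-real n..real n} (\<lambda>x. if x \<in> S then f x else 0)"
      using z(1) by (simp add: integral_unique)
    also have "\<dots> = integral (S \<inter> {-real n..real n}) f" by (rule integral_restrict_Int)
    finally show "norm (integral ({-real n..real n} \<inter> S) f - integral S f) < r"
      using z(2) by (simp add: Int_commute)
  qed
qed

lemma contour_integral_linepath_same_Im:
  assumes "a < b"
  shows "contour_integral (linepath (Complex a c) (Complex b c)) f =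
           integral {a..b} (\<lambda>x. f (Complex x c))"
proof -
  let ?z = "Complex a c" and ?z' = "Complex b c"
  have "contour_integral (linepath ?z ?z') f =
         (?z' - ?z) * integral {0..1} (\<lambda>x. f (linepath ?z ?z' x))"
    by (simp add: contour_integral_integral)
  also have "?z' - ?z = of_real (b - a)"
    by (simp add: complex_eq_iff)
  also have "integral {0..1} (\<lambda>x. f (linepath ?z ?z' x)) =
             integral {0..1} (\<lambda>x. f (Complex (linepath a b x) c))"
    by (rule integral_cong, rule arg_cong[of _ _ f]) (simp add: linepath_def complex_eq_iff algebra_simps)
  also have "\<dots> = integral {0..(b - a) / (b - a)} (\<lambda>x. f (Complex (a + (b - a) * x) c))"
    using \<open>a < b\<close> by (simp add: algebra_simps linepath_def)
  also have "{0..(b - a) / (b - a)} = (\<lambda>x. x / (b - a)) ` {0..b - a}"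
    using \<open>a < b\<close> by simp
  also have "integral \<dots> (\<lambda>x. f (Complex (a + (b - a) * x) c)) =
             integral {a-a..b-a} (\<lambda>x. f (Complex (x + a) c)) / of_real (b - a)"
    using \<open>a < b\<close> by (subst integral_stretch_real) (auto simp: scaleR_conv_of_real add_ac)
  also have "\<dots> = integral {a..b} (\<lambda>x. f (Complex x c)) / of_real (b - a)"
    by (subst integral_shift_real_ivl) (rule refl)
  finally show ?thesis
    using \<open>a < b\<close> by simp
qed

lemma linepath_int_bound:
  assumes "f contour_integrable_on linepath u v" "\<And>x. x \<in> closed_segment u v \<Longrightarrow> cmod (f x) \<le> Bd"
  shows "cmod (contour_integral (linepath u v) f) \<le> Bd * cmod (v - u)"
proof -
  have "0 \<le> cmod (f u)" by simp
  also have "\<dots> \<le> Bd" using assms(2)[of u] by simp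
  finally have "0 \<le> Bd" .
  then show ?thesis
    by (intro has_contour_integral_bound_linepath[OF has_contour_integral_integral[OF assms(1)]] assms(2))
qed

lemma strip_residue:
  fixes f :: "complex \<Rightarrow> complex" and a c1 c2 b :: real and P :: "complex set"
  assumes abc: "a < c1" "c1 < c2" "c2 < b"
    and holo: "f holomorphic_on ({x. a < Im x \<and> Im x < b} - P)"
    and finP: "finite P" and Pin: "\<And>p. p \<in> P \<Longrightarrow> c1 < Im p \<and> Im p < c2"
    and int1: "(\<lambda>t. f (Complex t c1)) integrable_on UNIV"
    and int2: "(\<lambda>t. f (Complex t c2)) integrable_on UNIV"
    and side: "\<And>T y. T \<ge> Tb \<Longrightarrow> c1 \<le> y \<Longrightarrow> y \<le> c2 \<Longrightarrow>
                 cmod (f (Complex T y)) \<le> B T \<and> cmod (f (Complex (-T) y)) \<le> B T"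
    and Blim: "(\<lambda>n. B (real n)) \<longlonglongrightarrow> 0"
  shows "integral UNIV (\<lambda>t. f (Complex t c1)) - integral UNIV (\<lambda>t. f (Complex t c2))
           = 2 * pi * \<i> * (\<Sum>p\<in>P. residue f p)"
proof -
  define S where "S = {x. a < Im x \<and> Im x < b}"
  define R0 where "R0 = max Tb (Max (insert 0 ((\<lambda>p. \<bar>Re p\<bar>) ` P))) + 1"
  have R0P: "\<bar>Re p\<bar> < R0" if "p \<in> P" for p
  proof -
    have "\<bar>Re p\<bar> \<le> Max (insert 0 ((\<lambda>p. \<bar>Re p\<bar>) ` P))"
      using finP that by (intro Max_ge) auto
    then show ?thesis unfolding R0_def by linarith
  qed
  have M0: "Max (insert 0 ((\<lambda>p. \<bar>Re p\<bar>) ` P)) \<ge> 0"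
    by (rule Max_ge) (use finP in auto)
  have R0T: "R0 > Tb" "R0 > 0"
    unfolding R0_def using M0 by auto
  have openS: "open S" unfolding S_def
    by (simp add: open_Collect_conj open_halfspace_Im_gt open_halfspace_Im_lt)
  have convS: "convex S" unfolding S_def
    using convex_Int[OF convex_halfspace_Im_gt[of a] convex_halfspace_Im_lt[of b]]
    by (simp add: Int_def)
  have contf: "continuous_on (S - P) f"
    using holo holomorphic_on_imp_continuous_on unfolding S_def by blast
  define I1 where "I1 = integral UNIV (\<lambda>t. f (Complex t c1))"
  define I2 where "I2 = integral UNIV (\<lambda>t. f (Complex t c2))"
  define bot where "bot = (\<lambda>n::nat. integral {-real n..real n} (\<lambda>t. f (Complex t c1)))"
  define top where "top = (\<lambda>n::nat. integral {-real n..real n} (\<lambda>t. f (Complex t c2)))"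
  define rt where "rt = (\<lambda>n::nat. contour_integral (linepath (Complex (real n) c1) (Complex (real n) c2)) f)"
  define lf where "lf = (\<lambda>n::nat. contour_integral (linepath (Complex (-real n) c2) (Complex (-real n) c1)) f)"
  have key: "bot n + rt n - top n + lf n = 2 * pi * \<i> * (\<Sum>p\<in>P. residue f p)"
    if n: "real n \<ge> R0" for n
  proof -
    define T where "T = real n"
    have T: "T \<ge> R0" "T > Tb" "T > 0" using n R0T unfolding T_def by auto
    define a1 a2 a3 a4 where "a1 = Complex (-T) c1" and "a2 = Complex T c1"
      and "a3 = Complex T c2" and "a4 = Complex (-T) c2"
    have rect: "rectpath a1 a3 = linepath a1 a2 +++ linepath a2 a3 +++ linepath a3 a4 +++ linepath a4 a1"
      by (simp add: rectpath_def a1_def a2_def a3_def a4_def Let_def)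
    have pimg: "path_image (rectpath a1 a3) =
           {z. Re z \<in> {-T, T} \<and> Im z \<in> {c1..c2}} \<union> {z. Im z \<in> {c1, c2} \<and> Re z \<in> {-T..T}}"
      using T abc by (subst path_image_rectpath) (auto simp: a1_def a3_def)
    have pimgS: "path_image (rectpath a1 a3) \<subseteq> S - P"
    proof
      fix z assume z: "z \<in> path_image (rectpath a1 a3)"
      then have "z \<in> S" using abc unfolding pimg S_def by auto
      moreover have "z \<notin> P"
      proof
        assume "z \<in> P"
        then have "\<bar>Re z\<bar> < T" "c1 < Im z" "Im z < c2" using R0P Pin T by force+
        then show False using z unfolding pimg by auto
      qed
      ultimately show "z \<in> S - P" by blast
    qed
    have seg: "closed_segment a1 a2 \<subseteq> S - P" "closed_segment a2 a3 \<subseteq> S - P"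
        "closed_segment a3 a4 \<subseteq> S - P" "closed_segment a4 a1 \<subseteq> S - P"
      using pimgS unfolding rect by (auto simp: path_image_join)
    have ci: "f contour_integrable_on linepath a1 a2" "f contour_integrable_on linepath a2 a3"
        "f contour_integrable_on linepath a3 a4" "f contour_integrable_on linepath a4 a1"
      using seg by (auto intro!: contour_integrable_continuous_linepath continuous_on_subset[OF contf])
    have "contour_integral (rectpath a1 a3) f
        = 2 * pi * \<i> * (\<Sum>p\<in>P. winding_number (rectpath a1 a3) p * residue f p)"
    proof (rule Residue_theorem[OF openS _ finP _ _ _ pimgS])
      show "connected S" using convS by (rule convex_connected)
      show "f holomorphic_on S - P" using holo unfolding S_def .
      show "\<forall>z. z \<notin> S \<longrightarrow> winding_number (rectpath a1 a3) z = 0"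
        using pimgS by (auto intro!: winding_number_zero_outside[OF _ convS])
    qed auto
    also have "(\<Sum>p\<in>P. winding_number (rectpath a1 a3) p * residue f p) = (\<Sum>p\<in>P. residue f p)"
    proof (rule sum.cong)
      fix p assume p: "p \<in> P"
      have "p \<in> box a1 a3" using R0P[OF p] Pin[OF p] T
        by (auto simp: in_box_complex_iff a1_def a3_def)
      then show "winding_number (rectpath a1 a3) p * residue f p = residue f p"
        by (simp add: winding_number_rectpath)
    qed simp
    finally have A: "contour_integral (rectpath a1 a3) f = 2 * pi * \<i> * (\<Sum>p\<in>P. residue f p)" .
    have "contour_integral (rectpath a1 a3) f = contour_integral (linepath a1 a2) f
        + contour_integral (linepath a2 a3) f + contour_integral (linepath a3 a4) f
        + contour_integral (linepath a4 a1) f"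
      unfolding rect using ci by (simp add: contour_integrable_joinI valid_path_join)
    moreover have "contour_integral (linepath a1 a2) f = bot n"
      unfolding a1_def a2_def bot_def T_def using T
      by (subst contour_integral_linepath_same_Im) (auto simp: T_def)
    moreover have "contour_integral (linepath a3 a4) f = - top n"
    proof -
      have "contour_integral (linepath a3 a4) f = - contour_integral (linepath a4 a3) f"
        using seg(3) by (intro contour_integral_reverse_linepath continuous_on_subset[OF contf])
           (auto simp: closed_segment_commute)
      also have "contour_integral (linepath a4 a3) f = top n"
        unfolding a4_def a3_def top_def T_def using T
        by (subst contour_integral_linepath_same_Im) (auto simp: T_def)
      finally show ?thesis .
    qed
    moreover have "contour_integral (linepath a2 a3) f = rt n"
      unfolding rt_def a2_def a3_def T_def ..
    moreover have "contour_integral (linepath a4 a1) f = lf n"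
      unfolding lf_def a4_def a1_def T_def ..
    ultimately show ?thesis using A by simp
  qed
  have ev: "eventually (\<lambda>n. bot n + rt n - top n + lf n = 2 * pi * \<i> * (\<Sum>p\<in>P. residue f p)) sequentially"
  proof (rule eventually_sequentiallyI[of "nat \<lceil>R0\<rceil>"])
    fix n assume "nat \<lceil>R0\<rceil> \<le> n"
    then have "real n \<ge> R0" by linarith
    then show "bot n + rt n - top n + lf n = 2 * pi * \<i> * (\<Sum>p\<in>P. residue f p)" by (rule key)
  qed
  have bot_lim: "bot \<longlonglongrightarrow> I1"
    using integral_trunc_limit[OF int1] unfolding bot_def I1_def by simp
  have top_lim: "top \<longlonglongrightarrow> I2"
    using integral_trunc_limit[OF int2] unfolding top_def I2_def by simp
  have side_lim: "rt \<longlonglongrightarrow> 0 \<and> lf \<longlonglongrightarrow> 0"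
  proof -
    have evb: "eventually (\<lambda>n. cmod (rt n) \<le> B (real n) * (c2 - c1) \<and>
                              cmod (lf n) \<le> B (real n) * (c2 - c1)) sequentially"
    proof (rule eventually_sequentiallyI[of "nat \<lceil>R0\<rceil>"])
      fix n assume "nat \<lceil>R0\<rceil> \<le> n"
      then have n: "real n \<ge> R0" by linarith
      then have nT: "real n \<ge> Tb" using R0T by linarith
      have segR: "closed_segment (Complex (real n) c1) (Complex (real n) c2) = {z. Re z = real n \<and> Im z \<in> {c1..c2}}"
        using abc by (auto simp: closed_segment_same_Re closed_segment_eq_real_ivl)
      have segL: "closed_segment (Complex (-real n) c2) (Complex (-real n) c1) = {z. Re z = -real n \<and> Im z \<in> {c1..c2}}"
        using abc by (auto simp: closed_segment_same_Re closed_segment_eq_real_ivl)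
      have inS: "{z. \<bar>Re z\<bar> = real n \<and> Im z \<in> {c1..c2}} \<subseteq> S - P"
      proof
        fix z assume z: "z \<in> {z. \<bar>Re z\<bar> = real n \<and> Im z \<in> {c1..c2}}"
        then have "z \<in> S" using abc unfolding S_def by auto
        moreover have "z \<notin> P" using R0P z n by force
        ultimately show "z \<in> S - P" by blast
      qed
      have inR: "closed_segment (Complex (real n) c1) (Complex (real n) c2) \<subseteq> S - P"
      proof
        fix z assume "z \<in> closed_segment (Complex (real n) c1) (Complex (real n) c2)"
        then have "z \<in> {z. \<bar>Re z\<bar> = real n \<and> Im z \<in> {c1..c2}}" unfolding segR by auto
        then show "z \<in> S - P" using inS by blast
      qed
      have inL: "closed_segment (Complex (-real n) c2) (Complex (-real n) c1) \<subseteq> S - P"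
      proof
        fix z assume "z \<in> closed_segment (Complex (-real n) c2) (Complex (-real n) c1)"
        then have "z \<in> {z. \<bar>Re z\<bar> = real n \<and> Im z \<in> {c1..c2}}" unfolding segL by auto
        then show "z \<in> S - P" using inS by blast
      qed
      have bd: "cmod (f z) \<le> B (real n)" if "\<bar>Re z\<bar> = real n" "Im z \<in> {c1..c2}" for z
      proof (cases "Re z \<ge> 0")
        case True
        then have "z = Complex (real n) (Im z)" using that by (auto simp: complex_eq_iff)
        then show ?thesis using side[OF nT, of "Im z"] that by (metis atLeastAtMost_iff)
      next
        case False
        then have "z = Complex (-real n) (Im z)" using that by (auto simp: complex_eq_iff)
        then show ?thesis using side[OF nT, of "Im z"] that by (metis atLeastAtMost_iff)
      qed
      have "cmod (rt n) \<le> B (real n) * cmod (Complex (real n) c2 - Complex (real n) c1)"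
        unfolding rt_def
      proof (rule linepath_int_bound)
        show "f contour_integrable_on linepath (Complex (real n) c1) (Complex (real n) c2)"
          by (intro contour_integrable_continuous_linepath continuous_on_subset[OF contf] inR)
      qed (use bd in \<open>auto simp: segR\<close>)
      moreover have "cmod (lf n) \<le> B (real n) * cmod (Complex (-real n) c1 - Complex (-real n) c2)"
        unfolding lf_def
      proof (rule linepath_int_bound)
        show "f contour_integrable_on linepath (Complex (-real n) c2) (Complex (-real n) c1)"
          by (intro contour_integrable_continuous_linepath continuous_on_subset[OF contf] inL)
      qed (use bd in \<open>auto simp: segL\<close>)
      moreover have "cmod (Complex (real n) c2 - Complex (real n) c1) = c2 - c1"
          "cmod (Complex (-real n) c1 - Complex (-real n) c2) = c2 - c1"
        using abc by (auto simp: cmod_def)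
      ultimately show "cmod (rt n) \<le> B (real n) * (c2 - c1) \<and> cmod (lf n) \<le> B (real n) * (c2 - c1)"
        by simp
    qed
    have "(\<lambda>n. B (real n) * (c2 - c1)) \<longlonglongrightarrow> 0 * (c2 - c1)"
      by (intro tendsto_intros Blim)
    then have Bl: "(\<lambda>n. B (real n) * (c2 - c1)) \<longlonglongrightarrow> 0" by simp
    have "rt \<longlonglongrightarrow> 0"
      by (rule Lim_null_comparison[OF _ Bl]) (use evb in \<open>auto elim: eventually_mono\<close>)
    moreover have "lf \<longlonglongrightarrow> 0"
      by (rule Lim_null_comparison[OF _ Bl]) (use evb in \<open>auto elim: eventually_mono\<close>)
    ultimately show ?thesis ..
  qed
  have "(\<lambda>n. bot n + rt n - top n + lf n) \<longlonglongrightarrow> I1 + 0 - I2 + 0"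
    using bot_lim top_lim side_lim by (intro tendsto_intros) auto
  then have "(\<lambda>n. 2 * pi * \<i> * (\<Sum>p\<in>P. residue f p)) \<longlonglongrightarrow> I1 + 0 - I2 + 0"
    by (rule Lim_transform_eventually) (use ev in auto)
  then have "2 * pi * \<i> * (\<Sum>p\<in>P. residue f p) = I1 - I2"
    using LIMSEQ_const_iff by fastforce
  then show ?thesis unfolding I1_def I2_def by simp
qed


lemma exp_neg_seq_lim: "(d::real) > 0 \<Longrightarrow> (\<lambda>n. exp (-d * real n)) \<longlonglongrightarrow> 0"
proof -
  assume d: "d > 0"
  have "(\<lambda>n. exp (-d) ^ n) \<longlonglongrightarrow> 0"
    using d by (intro LIMSEQ_power_zero) auto
  moreover have "exp (-d) ^ n = exp (-d * real n)" for n
    by (simp add: exp_of_nat_mult[symmetric] mult.commute)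
  ultimately show ?thesis by simp
qed

lemma vert_B_lim:
  assumes "\<bar>Re w\<bar> < 1"
  shows "(\<lambda>n. 4 * exp (\<bar>Im w\<bar> * Y) * exp ((\<bar>Re w\<bar> - 1) * real n)) \<longlonglongrightarrow> 0"
proof -
  have "(\<lambda>n. exp (-(1 - \<bar>Re w\<bar>) * real n)) \<longlonglongrightarrow> 0"
    using assms by (intro exp_neg_seq_lim) auto
  then have "(\<lambda>n. 4 * exp (\<bar>Im w\<bar> * Y) * exp (-(1 - \<bar>Re w\<bar>) * real n)) \<longlonglongrightarrow> 4 * exp (\<bar>Im w\<bar> * Y) * 0"
    by (intro tendsto_intros)
  then show ?thesis by simp
qed

lemma real_pt_ok: "\<bar>t\<bar> \<ge> 1 \<Longrightarrow> complex_of_real t \<noteq> 0 \<and> sinh (complex_of_real t) \<noteq> 0"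
  by (auto simp: sinh_c_eq_0)

lemma gg_real_bound: "\<bar>t\<bar> \<ge> 1 \<Longrightarrow> cmod (gg w (complex_of_real t)) \<le> 4 * exp (-(1 - \<bar>Re w\<bar>) * \<bar>t\<bar>)"
  using gg_vert_bound[of "complex_of_real t" 0 w] by simp

lemma gg_real_integrable:
  assumes "\<bar>Re w\<bar> < 1" and S: "S = {1..} \<or> S = {..-1}"
  shows "(\<lambda>t. gg w (complex_of_real t)) integrable_on S"
proof (rule integrable_by_bound)
  have S1: "\<And>t. t \<in> S \<Longrightarrow> \<bar>t\<bar> \<ge> 1" using S by auto
  show "continuous_on S (\<lambda>t. gg w (complex_of_real t))"
    by (rule continuous_on_compose2[OF gg_cont_on[of "complex_of_real ` S"]])
       (use S1 real_pt_ok in \<open>auto intro!: continuous_intros\<close>)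
  show "S \<in> sets lebesgue" using S by auto
  show "(\<lambda>t. 4 * exp (-(1 - \<bar>Re w\<bar>) * \<bar>t\<bar>)) integrable_on S"
    using S assms exp_abs_integrable_ge1[of "1 - \<bar>Re w\<bar>"] exp_abs_integrable_le1[of "1 - \<bar>Re w\<bar>"]
    by (auto intro!: int_cmult_real)
  show "cmod (gg w (complex_of_real t)) \<le> 4 * exp (-(1 - \<bar>Re w\<bar>) * \<bar>t\<bar>)" if "t \<in> S" for t
    using gg_real_bound S1[OF that] by blast
qed

lemma nb_le: "\<not> bounded {..(a::real)}"
proof
  assume "bounded {..a}"
  then obtain B where B: "\<forall>x\<in>{..a}. norm x \<le> B" by (auto simp: bounded_iff)
  have "min a (-\<bar>B\<bar>-1) \<in> {..a}" by simp
  with B have "norm (min a (-\<bar>B\<bar>-1)) \<le> B" by blast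
  then have h: "\<bar>min a (-\<bar>B\<bar>-1)\<bar> \<le> B" by simp
  have "min a (-\<bar>B\<bar>-1) \<le> -\<bar>B\<bar>-1" by simp
  with h show False by arith
qed

lemma nb_ge: "\<not> bounded {(a::real)..}"
proof
  assume "bounded {a..}"
  then obtain B where B: "\<forall>x\<in>{a..}. norm x \<le> B" by (auto simp: bounded_iff)
  have "max a (\<bar>B\<bar>+1) \<in> {a..}" by simp
  with B have "norm (max a (\<bar>B\<bar>+1)) \<le> B" by blast
  then have h: "\<bar>max a (\<bar>B\<bar>+1)\<bar> \<le> B" by simp
  have "max a (\<bar>B\<bar>+1) \<ge> \<bar>B\<bar>+1" by simp
  with h show False by arith
qed

lemma cm0: "cm 0 = pi / 2" by (simp add: cm_def)

lemma J_eq_line: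
  assumes w: "\<bar>Re w\<bar> < 1"
  shows "integral {..-1} (\<lambda>x. gg w (of_real x)) + contour_integral (part_circlepath 0 1 pi 0) (gg w)
          + integral {1..} (\<lambda>x. gg w (of_real x)) = Lc w (cm 0)"
proof -
  define c where "c = pi / 2"
  have c: "c > 0" "c < 3" "c \<ge> 1" using pi_gt3 pi_less_4 unfolding c_def by auto
  define Q where "Q = {z. 0 \<le> Im z \<and> Im z \<le> c \<and> \<not> (Re z = 0 \<and> Im z \<le> 0)}"
  define S where "S = {x. Im x < 3} - {x. Re x = 0 \<and> Im x \<le> 0}"
  define R where "R = {x. Re x = 0 \<and> Im x \<le> 0}"
  have QS: "Q \<subseteq> S" unfolding Q_def S_def using c by auto
  have R_eq: "R = {x. Re x \<le> 0} \<inter> {x. Re x \<ge> 0} \<inter> {x. Im x \<le> 0}" unfolding R_def by auto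
  have closedR: "closed R" unfolding R_eq
    by (intro closed_Int closed_halfspace_Re_le closed_halfspace_Re_ge closed_halfspace_Im_le)
  have convR: "convex R" unfolding R_eq
    by (intro convex_Int convex_halfspace_Re_le convex_halfspace_Re_ge convex_halfspace_Im_le)
  have openS: "open S" unfolding S_def using closedR unfolding R_def
    by (intro open_Diff open_halfspace_Im_lt)
  have Sok: "x \<noteq> 0 \<and> sinh x \<noteq> 0" if "x \<in> S" for x
  proof
    show "x \<noteq> 0" using that unfolding S_def by auto
    show "sinh x \<noteq> 0"
    proof
      assume "sinh x = 0"
      then obtain k :: int where k: "x = \<i> * (of_int k * pi)" using sinh_c_eq_0' by blast
      then have "Re x = 0" "Im x = of_int k * pi" by auto
      with that have "of_int k * pi > 0" "of_int k * pi < 3" unfolding S_def by auto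
      then have "k > 0" by (simp add: zero_less_mult_iff)
      then have "of_int k * pi \<ge> 1 * pi" by (intro mult_right_mono) auto
      with \<open>of_int k * pi < 3\<close> pi_gt3 show False by simp
    qed
  qed
  have holo: "gg w holomorphic_on S" by (rule gg_holo_on[OF Sok])
  define I1 where "I1 = integral {..-1} (\<lambda>x. gg w (of_real x))"
  define I2 where "I2 = integral {1..} (\<lambda>x. gg w (of_real x))"
  define SC where "SC = contour_integral (part_circlepath 0 1 pi 0) (gg w)"
  define Ineg where "Ineg = (\<lambda>n::nat. integral {-real n..-1} (\<lambda>x. gg w (of_real x)))"
  define Ipos where "Ipos = (\<lambda>n::nat. integral {1..real n} (\<lambda>x. gg w (of_real x)))"
  define top where "top = (\<lambda>n::nat. integral {-real n..real n} (\<lambda>t. gg w (Complex t c)))"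
  define rs where "rs = (\<lambda>n::nat. contour_integral (linepath (Complex (real n) 0) (Complex (real n) c)) (gg w))"
  define ls where "ls = (\<lambda>n::nat. contour_integral (linepath (Complex (-real n) c) (Complex (-real n) 0)) (gg w))"
  have circ_img: "path_image (part_circlepath 0 1 pi 0) \<subseteq> Q"
  proof
    fix z assume "z \<in> path_image (part_circlepath 0 1 pi 0)"
    then obtain x where x: "x \<in> closed_segment pi 0" "z = cis x"
      unfolding path_image_part_circlepath' by auto
    then have x': "0 \<le> x" "x \<le> pi" using pi_gt_zero by (auto simp: closed_segment_eq_real_ivl split: if_splits)
    have e: "Im z = sin x" "Re z = cos x" using x by auto
    have s0: "sin x \<ge> 0" using x' by (intro sin_ge_zero)
    have sc: "sin x \<le> c" using sin_le_one[of x] c(3) by linarith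
    have nc: "\<not> (cos x = 0 \<and> sin x \<le> 0)"
    proof
      assume "cos x = 0 \<and> sin x \<le> 0"
      then have "cos x = 0" "sin x = 0" using \<open>sin x \<ge> 0\<close> by auto
      then show False using sin_cos_squared_add[of x] by simp
    qed
    show "z \<in> Q" unfolding Q_def mem_Collect_eq e using s0 sc nc by blast
  qed
  have key: "Ineg n + SC + Ipos n + rs n - top n + ls n = 0" if n: "real n \<ge> 2" for n
  proof -
    define T where "T = real n"
    have T: "T \<ge> 2" using n unfolding T_def by auto
    define p1 where "p1 = linepath (Complex (-T) 0) (Complex (-1) 0)"
    define p2 where "p2 = part_circlepath 0 1 pi 0"
    define p3 where "p3 = linepath (Complex 1 0) (Complex T 0)"
    define p4 where "p4 = linepath (Complex T 0) (Complex T c)"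
    define p5 where "p5 = linepath (Complex T c) (Complex (-T) c)"
    define p6 where "p6 = linepath (Complex (-T) c) (Complex (-T) 0)"
    define g where "g = p1 +++ p2 +++ p3 +++ p4 +++ p5 +++ p6"
    have i1: "path_image p1 \<subseteq> Q"
    proof
      fix z assume "z \<in> path_image p1"
      then have "Im z = 0" "Re z \<in> closed_segment (-T) (-1)"
        unfolding p1_def by (auto simp: closed_segment_same_Im)
      then have "Im z = 0" "Re z \<le> -1" using T by (auto simp: closed_segment_eq_real_ivl)
      then show "z \<in> Q" unfolding Q_def using c by simp
    qed
    have i2: "path_image p2 \<subseteq> Q" unfolding p2_def by (rule circ_img)
    have i3: "path_image p3 \<subseteq> Q"
    proof
      fix z assume "z \<in> path_image p3"
      then have "Im z = 0" "Re z \<in> closed_segment 1 T"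
        unfolding p3_def by (auto simp: closed_segment_same_Im)
      then have "Im z = 0" "Re z \<ge> 1" using T by (auto simp: closed_segment_eq_real_ivl)
      then show "z \<in> Q" unfolding Q_def using c by simp
    qed
    have i4: "path_image p4 \<subseteq> Q"
    proof
      fix z assume "z \<in> path_image p4"
      then have "Re z = T" "Im z \<in> closed_segment 0 c"
        unfolding p4_def by (auto simp: closed_segment_same_Re)
      then have "Re z = T" "0 \<le> Im z" "Im z \<le> c" using c by (auto simp: closed_segment_eq_real_ivl)
      then show "z \<in> Q" unfolding Q_def using T by simp
    qed
    have i5: "path_image p5 \<subseteq> Q"
    proof
      fix z assume "z \<in> path_image p5"
      then have "Im z = c"
        unfolding p5_def by (auto simp: closed_segment_same_Im)
      then show "z \<in> Q" unfolding Q_def using c by simp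
    qed
    have i6: "path_image p6 \<subseteq> Q"
    proof
      fix z assume "z \<in> path_image p6"
      then have "Re z = -T" "Im z \<in> closed_segment c 0"
        unfolding p6_def by (auto simp: closed_segment_same_Re)
      then have "Re z = -T" "0 \<le> Im z" "Im z \<le> c" using c by (auto simp: closed_segment_eq_real_ivl)
      then show "z \<in> Q" unfolding Q_def using T by simp
    qed
    have ends: "pathfinish p1 = pathstart p2" "pathfinish p2 = pathstart p3"
        "pathfinish p3 = pathstart p4" "pathfinish p4 = pathstart p5"
        "pathfinish p5 = pathstart p6" "pathfinish p6 = pathstart p1"
      unfolding p1_def p2_def p3_def p4_def p5_def p6_def by (auto simp: complex_eq_iff)
    have vp: "valid_path p1" "valid_path p2" "valid_path p3" "valid_path p4" "valid_path p5" "valid_path p6"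
      unfolding p1_def p2_def p3_def p4_def p5_def p6_def by auto
    have vg: "valid_path g" unfolding g_def using vp ends by (auto intro!: valid_path_join)
    have loop: "pathfinish g = pathstart g" unfolding g_def using ends by simp
    have gimg: "path_image g \<subseteq> Q" unfolding g_def using ends i1 i2 i3 i4 i5 i6
      by (simp add: path_image_join)
    have pg: "path g" using vg valid_path_imp_path by blast
    have wz: "winding_number g z = 0" if "z \<notin> S" for z
    proof (cases "Im z \<ge> 3")
      case True
      show ?thesis
      proof (rule winding_number_zero_outside[OF pg convex_halfspace_Im_le[of c] loop])
        show "z \<notin> {x. Im x \<le> c}" using True c by auto
        show "path_image g \<subseteq> {x. Im x \<le> c}" using gimg unfolding Q_def by auto
      qed
    next
      case False
      then have zR: "z \<in> R" using that unfolding S_def R_def by auto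
      have "winding_number g z = winding_number g (-\<i>)"
      proof (rule winding_number_eq[OF pg loop zR])
        show "-\<i> \<in> R" unfolding R_def by simp
        show "connected R" using convR by (rule convex_connected)
        show "R \<inter> path_image g = {}" using gimg unfolding Q_def R_def by auto
      qed
      also have "\<dots> = 0"
      proof (rule winding_number_zero_outside[OF pg convex_halfspace_Im_ge[of 0] loop])
        show "-\<i> \<notin> {x. 0 \<le> Im x}" by simp
        show "path_image g \<subseteq> {x. 0 \<le> Im x}" using gimg unfolding Q_def by auto
      qed
      finally show ?thesis .
    qed
    have "(gg w has_contour_integral 0) g"
      by (rule Cauchy_theorem_global[OF openS holo vg loop]) (use gimg QS wz in auto)
    then have z: "contour_integral g (gg w) = 0" by (rule contour_integral_unique)
    have ci: "gg w contour_integrable_on p1" "gg w contour_integrable_on p2" "gg w contour_integrable_on p3"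
        "gg w contour_integrable_on p4" "gg w contour_integrable_on p5" "gg w contour_integrable_on p6"
    proof -
      show "gg w contour_integrable_on p1"
        by (rule contour_integrable_holomorphic_simple[OF holo openS vp(1)]) (use i1 QS in blast)
      show "gg w contour_integrable_on p2"
        by (rule contour_integrable_holomorphic_simple[OF holo openS vp(2)]) (use i2 QS in blast)
      show "gg w contour_integrable_on p3"
        by (rule contour_integrable_holomorphic_simple[OF holo openS vp(3)]) (use i3 QS in blast)
      show "gg w contour_integrable_on p4"
        by (rule contour_integrable_holomorphic_simple[OF holo openS vp(4)]) (use i4 QS in blast)
      show "gg w contour_integrable_on p5"
        by (rule contour_integrable_holomorphic_simple[OF holo openS vp(5)]) (use i5 QS in blast)
      show "gg w contour_integrable_on p6"
        by (rule contour_integrable_holomorphic_simple[OF holo openS vp(6)]) (use i6 QS in blast)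
    qed
    have J: "contour_integral (a +++ b) (gg w) = contour_integral a (gg w) + contour_integral b (gg w)"
            "gg w contour_integrable_on (a +++ b)" "valid_path (a +++ b)"
      if "gg w contour_integrable_on a" "gg w contour_integrable_on b" "valid_path a" "valid_path b"
         "pathfinish a = pathstart b" for a b
    proof -
      show "contour_integral (a +++ b) (gg w) = contour_integral a (gg w) + contour_integral b (gg w)"
        by (rule contour_integral_join[OF that(1-4)])
      show "gg w contour_integrable_on (a +++ b)" by (rule contour_integrable_joinI[OF that(1-4)])
      show "valid_path (a +++ b)" by (rule valid_path_join[OF that(3-5)])
    qed
    have e5: "pathfinish p4 = pathstart (p5 +++ p6)" using ends by simp
    have e4: "pathfinish p3 = pathstart (p4 +++ p5 +++ p6)" using ends by simp
    have e3: "pathfinish p2 = pathstart (p3 +++ p4 +++ p5 +++ p6)" using ends by simp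
    have e2: "pathfinish p1 = pathstart (p2 +++ p3 +++ p4 +++ p5 +++ p6)" using ends by simp
    note J56 = J[OF ci(5) ci(6) vp(5) vp(6) ends(5)]
    note J46 = J[OF ci(4) J56(2) vp(4) J56(3) e5]
    note J36 = J[OF ci(3) J46(2) vp(3) J46(3) e4]
    note J26 = J[OF ci(2) J36(2) vp(2) J36(3) e3]
    note J16 = J[OF ci(1) J26(2) vp(1) J26(3) e2]
    have "contour_integral g (gg w) = contour_integral p1 (gg w) + contour_integral p2 (gg w)
       + contour_integral p3 (gg w) + contour_integral p4 (gg w) + contour_integral p5 (gg w)
       + contour_integral p6 (gg w)"
      unfolding g_def J16(1) J26(1) J36(1) J46(1) J56(1) by (simp add: algebra_simps)
    moreover have "contour_integral p1 (gg w) = Ineg n"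
      unfolding p1_def Ineg_def using T
      by (subst contour_integral_linepath_same_Im) (auto simp: T_def complex_of_real_def)
    moreover have "contour_integral p3 (gg w) = Ipos n"
      unfolding p3_def Ipos_def using T
      by (subst contour_integral_linepath_same_Im) (auto simp: T_def complex_of_real_def)
    moreover have "contour_integral p2 (gg w) = SC" unfolding p2_def SC_def ..
    moreover have "contour_integral p4 (gg w) = rs n" unfolding p4_def rs_def T_def ..
    moreover have "contour_integral p6 (gg w) = ls n" unfolding p6_def ls_def T_def ..
    moreover have "contour_integral p5 (gg w) = - top n"
    proof -
      have "contour_integral p5 (gg w) = - contour_integral (linepath (Complex (-T) c) (Complex T c)) (gg w)"
        unfolding p5_def
        using i5 QS unfolding p5_def
        by (intro contour_integral_reverse_linepath holomorphic_on_imp_continuous_on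
             holomorphic_on_subset[OF holo]) (auto simp: closed_segment_commute)
      also have "contour_integral (linepath (Complex (-T) c) (Complex T c)) (gg w) = top n"
        unfolding top_def using T
        by (subst contour_integral_linepath_same_Im) (auto simp: T_def)
      finally show ?thesis .
    qed
    ultimately show ?thesis using z by simp
  qed
  have ev: "eventually (\<lambda>n. Ineg n + SC + Ipos n + rs n - top n + ls n = 0) sequentially"
    by (rule eventually_sequentiallyI[of 2]) (auto intro!: key)
  have int_neg: "(\<lambda>x. gg w (of_real x)) integrable_on {..-1}"
    using gg_real_integrable[OF w] by blast
  have int_pos: "(\<lambda>x. gg w (of_real x)) integrable_on {1..}"
    using gg_real_integrable[OF w] by blast
  have int_top: "(\<lambda>t. gg w (Complex t c)) integrable_on UNIV"
    using gg_line_integrable[OF w, of 0] unfolding cm0 c_def .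
  have nb1: "\<not> bounded {..-1::real}" by (rule nb_le)
  have lim_neg: "Ineg \<longlonglongrightarrow> I1"
  proof -
    have "(\<lambda>n. integral ({-real n..real n} \<inter> {..-1}) (\<lambda>x. gg w (of_real x))) \<longlonglongrightarrow> I1"
      unfolding I1_def by (rule integral_trunc_limit[OF int_neg]) (auto simp: nb1)
    moreover have "{-real n..real n} \<inter> {..-1} = {-real n..-1}" for n by auto
    ultimately show ?thesis unfolding Ineg_def by simp
  qed
  have lim_pos: "Ipos \<longlonglongrightarrow> I2"
  proof -
    have "(\<lambda>n. integral ({-real n..real n} \<inter> {1..}) (\<lambda>x. gg w (of_real x))) \<longlonglongrightarrow> I2"
      unfolding I2_def by (rule integral_trunc_limit[OF int_pos]) (rule nb_ge)
    moreover have "{-real n..real n} \<inter> {1..} = {1..real n}" for n by auto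
    ultimately show ?thesis unfolding Ipos_def by simp
  qed
  have lim_top: "top \<longlonglongrightarrow> Lc w (cm 0)"
    using integral_trunc_limit[OF int_top] unfolding top_def Lc_def cm0 c_def by simp
  define Bn where "Bn = (\<lambda>n::nat. 4 * exp (\<bar>Im w\<bar> * c) * exp ((\<bar>Re w\<bar> - 1) * real n))"
  have Bl: "(\<lambda>n. Bn n * c) \<longlonglongrightarrow> 0"
    using tendsto_mult[OF vert_B_lim[OF w, of c] tendsto_const[of c]] unfolding Bn_def by simp
  have side_bd: "cmod (rs n) \<le> Bn n * c \<and> cmod (ls n) \<le> Bn n * c" if n: "real n \<ge> 2" for n
  proof -
    have bd: "cmod (gg w z) \<le> Bn n" if "\<bar>Re z\<bar> = real n" "Im z \<in> {0..c}" for z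
      unfolding Bn_def using gg_vert_bound[of z c w] that n c by auto
    have segR: "closed_segment (Complex (real n) 0) (Complex (real n) c) = {z. Re z = real n \<and> Im z \<in> {0..c}}"
      using c by (auto simp: closed_segment_same_Re closed_segment_eq_real_ivl)
    have segL: "closed_segment (Complex (-real n) c) (Complex (-real n) 0) = {z. Re z = -real n \<and> Im z \<in> {0..c}}"
      using c by (auto simp: closed_segment_same_Re closed_segment_eq_real_ivl)
    have inS: "{z. \<bar>Re z\<bar> = real n \<and> Im z \<in> {0..c}} \<subseteq> S"
      using QS n unfolding Q_def by auto
    have inR: "closed_segment (Complex (real n) 0) (Complex (real n) c) \<subseteq> S"
      unfolding segR using inS by auto
    have inL: "closed_segment (Complex (-real n) c) (Complex (-real n) 0) \<subseteq> S"
      unfolding segL using inS by auto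
    have "cmod (rs n) \<le> Bn n * cmod (Complex (real n) c - Complex (real n) 0)"
      unfolding rs_def
      by (rule linepath_int_bound)
         (use inR bd in \<open>auto simp: segR intro!: contour_integrable_holomorphic_simple[OF holo openS]\<close>)
    moreover have "cmod (ls n) \<le> Bn n * cmod (Complex (-real n) 0 - Complex (-real n) c)"
      unfolding ls_def
      by (rule linepath_int_bound)
         (use inL bd in \<open>auto simp: segL intro!: contour_integrable_holomorphic_simple[OF holo openS]\<close>)
    moreover have "cmod (Complex (real n) c - Complex (real n) 0) = c"
        "cmod (Complex (-real n) 0 - Complex (-real n) c) = c"
      using c by (auto simp: cmod_def)
    ultimately show ?thesis by simp
  qed
  have evb: "eventually (\<lambda>n. cmod (rs n) \<le> Bn n * c \<and> cmod (ls n) \<le> Bn n * c) sequentially"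
    by (rule eventually_sequentiallyI[of 2]) (auto intro!: side_bd)
  have rs_lim: "rs \<longlonglongrightarrow> 0"
    by (rule Lim_null_comparison[OF _ Bl]) (use evb in \<open>auto elim: eventually_mono\<close>)
  have ls_lim: "ls \<longlonglongrightarrow> 0"
    by (rule Lim_null_comparison[OF _ Bl]) (use evb in \<open>auto elim: eventually_mono\<close>)
  have "(\<lambda>n. Ineg n + SC + Ipos n + rs n - top n + ls n) \<longlonglongrightarrow> I1 + SC + I2 + 0 - Lc w (cm 0) + 0"
    by (intro tendsto_intros lim_neg lim_pos lim_top rs_lim ls_lim)
  then have "(\<lambda>n. 0) \<longlonglongrightarrow> I1 + SC + I2 + 0 - Lc w (cm 0) + 0"
    by (rule Lim_transform_eventually) (use ev in auto)
  then have "0 = I1 + SC + I2 + 0 - Lc w (cm 0) + 0"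
    by (rule LIMSEQ_unique[OF tendsto_const])
  then have "I1 + SC + I2 - Lc w (cm 0) = 0" by simp
  then show ?thesis unfolding I1_def I2_def SC_def by (simp add: algebra_simps)
qed


definition Sf :: "complex \<Rightarrow> complex" where "Sf y = (if y = 0 then 1 else sinh y / y)"

lemma Sf_holo: "Sf holomorphic_on UNIV"
proof -
  have "(\<lambda>y. sinh y / y) holomorphic_on UNIV - {0}" by (auto intro!: holomorphic_intros)
  moreover have "(\<lambda>y::complex. sinh y / y) \<midarrow>0\<rightarrow> 1"
  proof -
    have "(sinh has_field_derivative cosh 0) (at (0::complex))"
      using DERIV_ident[THEN has_field_derivative_sinh, of 0] by simp
    then have "((\<lambda>y. (sinh y - sinh 0) / (y - 0)) \<longlongrightarrow> cosh 0) (at (0::complex))"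
      by (simp only: has_field_derivative_iff)
    then show ?thesis by simp
  qed
  ultimately have "(\<lambda>y. if y = 0 then 1 else sinh y / y) holomorphic_on UNIV"
    by (intro removable_singularity) auto
  then show ?thesis unfolding Sf_def[abs_def] .
qed

lemma sinh_Sf: "sinh y = y * Sf y"
  by (simp add: Sf_def)

lemma Sf_nz: "cmod y < pi \<Longrightarrow> Sf y \<noteq> 0"
proof
  assume y: "cmod y < pi" and S: "Sf y = 0"
  then have "y \<noteq> 0" by (auto simp: Sf_def)
  with S have "sinh y = 0" by (simp add: Sf_def)
  then obtain k :: int where k: "y = \<i> * (of_int k * pi)" using sinh_c_eq_0' by blast
  with \<open>y \<noteq> 0\<close> have "k \<noteq> 0" by auto
  then have "\<bar>of_int k\<bar> \<ge> (1::real)" by linarith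
  have "cmod y = \<bar>of_int k\<bar> * pi" using k by (simp add: norm_mult abs_mult)
  also have "\<dots> \<ge> 1 * pi" using \<open>\<bar>of_int k\<bar> \<ge> 1\<close> by (intro mult_right_mono) auto
  finally show False using y by simp
qed

lemma Sf_even: "Sf (-y) = Sf y"
  by (simp add: Sf_def)

lemma Sf_deriv0: "(Sf has_field_derivative 0) (at 0)"
proof -
  have "Sf field_differentiable at 0"
    using Sf_holo holomorphic_on_imp_differentiable_at by blast
  then obtain D where D: "(Sf has_field_derivative D) (at 0)"
    by (auto simp: field_differentiable_def)
  have m: "((\<lambda>y::complex. -y) has_field_derivative -1) (at 0)"
    by (auto intro!: derivative_eq_intros)
  have D': "(Sf has_field_derivative D) (at ((\<lambda>y. -y) 0))" using D by simp
  have "((\<lambda>y. Sf (-y)) has_field_derivative D * (-1)) (at 0)"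
    by (rule DERIV_chain2[OF D' m])
  then have "(Sf has_field_derivative -D) (at 0)" by (simp add: Sf_even)
  with D have "D = -D" by (rule DERIV_unique)
  then have "D = 0" by simp
  with D show ?thesis by simp
qed

lemma sinh_ipi_zero: "sinh (\<i> * (of_int m * pi)) = 0"
  using sinh_c_eq_0' by blast

lemma cosh_ipi: "cosh (\<i> * (of_int m * pi)) = exp (- (\<i> * (of_int m * pi)))"
proof -
  let ?p = "\<i> * (of_int m * pi)"
  have "exp (2 * of_int m * pi * \<i>) = 1" by (rule exp_integer_2pi) simp
  then have "exp ?p * exp ?p = 1" by (simp add: exp_add[symmetric] algebra_simps)
  then have "exp ?p = exp (- ?p)" by (simp add: exp_minus field_simps)
  then show ?thesis by (simp add: cosh_def scaleR_conv_of_real)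
qed

lemma residue_gg_ipi:
  assumes m: "m \<noteq> 0"
  shows "residue (gg w) (\<i> * (of_int m * pi)) = exp ((w + 1) * (\<i> * (of_int m * pi))) / (\<i> * (of_int m * pi))"
proof -
  define p where "p = \<i> * (of_int m * pi)"
  have pn: "cmod p \<ge> pi"
  proof -
    have "\<bar>of_int m\<bar> \<ge> (1::real)" using m by linarith
    have "cmod p = \<bar>of_int m\<bar> * pi" by (simp add: p_def norm_mult abs_mult)
    also have "\<dots> \<ge> 1 * pi" using \<open>\<bar>of_int m\<bar> \<ge> 1\<close> by (intro mult_right_mono) auto
    finally show ?thesis by simp
  qed
  have sp: "sinh p = 0" unfolding p_def by (rule sinh_ipi_zero)
  have cp: "cosh p = exp (-p)" unfolding p_def by (rule cosh_ipi)
  define psi where "psi = (\<lambda>x. exp (w * x) / (x * cosh p * Sf (x - p)))"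
  have nz: "x \<noteq> 0" "Sf (x - p) \<noteq> 0" if "x \<in> ball p pi" for x
  proof -
    show "x \<noteq> 0" using that pn by (auto simp: dist_norm norm_minus_commute)
    show "Sf (x - p) \<noteq> 0" using that by (intro Sf_nz) (auto simp: dist_norm norm_minus_commute)
  qed
  have holo: "psi holomorphic_on ball p pi"
    unfolding psi_def using nz cp
    by (auto intro!: holomorphic_intros holomorphic_on_compose_gen[OF _ Sf_holo, unfolded o_def])
  have "residue (gg w) p = residue (\<lambda>x. psi x / (x - p)) p"
  proof (rule residue_cong)
    show "eventually (\<lambda>x. gg w x = psi x / (x - p)) (at p)"
      unfolding eventually_at
    proof (intro exI[of _ pi] conjI ballI impI)
      fix x assume "x \<in> UNIV" and x: "x \<noteq> p \<and> dist x p < pi"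
      have "sinh x = sinh ((x - p) + p)" by simp
      also have "\<dots> = sinh (x - p) * cosh p" by (simp only: sinh_add sp) simp
      also have "\<dots> = (x - p) * Sf (x - p) * cosh p" by (simp add: sinh_Sf)
      finally have sx: "sinh x = (x - p) * Sf (x - p) * cosh p" .
      have xb: "x \<in> ball p pi" using x by (simp add: dist_commute)
      have "cosh p \<noteq> 0" using cp by simp
      moreover have "x - p \<noteq> 0" using x by simp
      ultimately show "gg w x = psi x / (x - p)"
        unfolding gg_def psi_def sx using nz[OF xb] by (simp add: field_simps)
    qed simp
  qed simp
  also have "\<dots> = psi p"
    using holo by (intro residue_simple) auto
  also have "\<dots> = exp ((w + 1) * p) / p"
    by (simp add: psi_def cp Sf_def exp_minus exp_add[symmetric] field_simps algebra_simps)
  finally show ?thesis unfolding p_def .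
qed

lemma residue_gg_0: "residue (gg w) 0 = w"
proof -
  define phi where "phi = (\<lambda>x. exp (w * x) / Sf x)"
  have nz: "Sf x \<noteq> 0" if "x \<in> ball 0 pi" for x using that by (intro Sf_nz) auto
  have holo: "phi holomorphic_on ball 0 pi"
    unfolding phi_def using nz
    by (auto intro!: holomorphic_intros holomorphic_on_subset[OF Sf_holo])
  have "residue (gg w) 0 = residue (\<lambda>x. phi x / (x - 0) ^ Suc 1) 0"
  proof (rule residue_cong)
    show "eventually (\<lambda>x. gg w x = phi x / (x - 0) ^ Suc 1) (at 0)"
      unfolding eventually_at
    proof (intro exI[of _ pi] conjI ballI impI)
      fix x :: complex assume "x \<in> UNIV" and x: "x \<noteq> 0 \<and> dist x 0 < pi"
      then have "Sf x \<noteq> 0" using nz by auto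
      then show "gg w x = phi x / (x - 0) ^ Suc 1"
        using x by (simp add: gg_def phi_def sinh_Sf power2_eq_square field_simps)
    qed simp
  qed simp
  also have "\<dots> = (deriv ^^ 1) phi 0 / fact 1"
    using holo by (intro residue_holomorphic_over_power) auto
  also have "\<dots> = deriv phi 0" by simp
  also have "\<dots> = w"
  proof (rule DERIV_imp_deriv)
    have e: "((\<lambda>x. exp (w * x)) has_field_derivative w * exp (w * 0)) (at 0)"
      by (auto intro!: derivative_eq_intros)
    have "Sf 0 = 1" by (simp add: Sf_def)
    then show "(phi has_field_derivative w) (at 0)"
      using DERIV_divide[OF e Sf_deriv0] unfolding phi_def by simp
  qed
  finally show ?thesis .
qed


lemma strip_zero_unique:
  assumes x: "cm (m - 1) - 1 < Im x" "Im x < cm m + 1" and s: "sinh x = 0"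
  shows "x = \<i> * (of_int m * pi)"
proof -
  obtain k :: int where k: "x = \<i> * (of_int k * pi)" using s sinh_c_eq_0' by blast
  then have Ix: "Im x = of_int k * pi" by simp
  have p2: "pi / 2 > 1" using pi_gt3 by simp
  have "of_int k * pi > (of_int m - 1) * pi"
    using x(1) p2 unfolding Ix cm_def by (simp add: algebra_simps)
  then have "of_int k > (of_int m - 1 :: real)" using pi_gt_zero by (simp add: mult_less_cancel_right)
  then have k1: "k > m - 1" by linarith
  have "of_int k * pi < (of_int m + 1) * pi"
    using x(2) p2 unfolding Ix cm_def by (simp add: algebra_simps)
  then have "of_int k < (of_int m + 1 :: real)" using pi_gt_zero by (simp add: mult_less_cancel_right)
  then have k2: "k < m + 1" by linarith
  from k1 k2 have "k = m" by simp
  with k show ?thesis by simp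
qed

lemma strip_step:
  assumes w: "\<bar>Re w\<bar> < 1"
  shows "Lc w (cm (m - 1)) - Lc w (cm m) = 2 * pi * \<i> * residue (gg w) (\<i> * (of_int m * pi))"
proof -
  define p where "p = \<i> * (of_int m * pi)"
  define Y where "Y = max \<bar>cm (m - 1)\<bar> \<bar>cm m\<bar>"
  have cmlt: "cm (m - 1) < cm m" by (simp add: cm_def algebra_simps)
  have pin: "cm (m - 1) < Im p \<and> Im p < cm m" by (simp add: p_def cm_def algebra_simps)
  have "Lc w (cm (m - 1)) - Lc w (cm m) = 2 * pi * \<i> * (\<Sum>q\<in>{p}. residue (gg w) q)"
    unfolding Lc_def
  proof (rule strip_residue[where a = "cm (m - 1) - 1" and b = "cm m + 1" and Tb = 1
         and B = "\<lambda>T. 4 * exp (\<bar>Im w\<bar> * Y) * exp ((\<bar>Re w\<bar> - 1) * T)"])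
    show "cm (m - 1) - 1 < cm (m - 1)" "cm (m - 1) < cm m" "cm m < cm m + 1" using cmlt by auto
    show "gg w holomorphic_on {x. cm (m - 1) - 1 < Im x \<and> Im x < cm m + 1} - {p}"
    proof (rule gg_holo_on)
      fix x assume x: "x \<in> {x. cm (m - 1) - 1 < Im x \<and> Im x < cm m + 1} - {p}"
      have "sinh x \<noteq> 0" using strip_zero_unique[of m x] x unfolding p_def by auto
      moreover have "x \<noteq> 0" using calculation by auto
      ultimately show "x \<noteq> 0 \<and> sinh x \<noteq> 0" by simp
    qed
    show "finite {p}" by simp
    show "\<And>q. q \<in> {p} \<Longrightarrow> cm (m - 1) < Im q \<and> Im q < cm m" using pin by simp
    show "(\<lambda>t. gg w (Complex t (cm (m - 1)))) integrable_on UNIV" by (rule gg_line_integrable[OF w])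
    show "(\<lambda>t. gg w (Complex t (cm m))) integrable_on UNIV" by (rule gg_line_integrable[OF w])
    show "(\<lambda>n. 4 * exp (\<bar>Im w\<bar> * Y) * exp ((\<bar>Re w\<bar> - 1) * real n)) \<longlonglongrightarrow> 0"
      by (rule vert_B_lim[OF w])
    fix T y :: real assume T: "1 \<le> T" and y: "cm (m - 1) \<le> y" "y \<le> cm m"
    have yY: "\<bar>y\<bar> \<le> Y" unfolding Y_def using y by linarith
    show "cmod (gg w (Complex T y)) \<le> 4 * exp (\<bar>Im w\<bar> * Y) * exp ((\<bar>Re w\<bar> - 1) * T) \<and>
          cmod (gg w (Complex (- T) y)) \<le> 4 * exp (\<bar>Im w\<bar> * Y) * exp ((\<bar>Re w\<bar> - 1) * T)"
      using gg_vert_bound[of "Complex T y" Y w] gg_vert_bound[of "Complex (-T) y" Y w] T yY by auto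
  qed
  then show ?thesis unfolding p_def by simp
qed

lemma strip_step_val:
  assumes w: "\<bar>Re w\<bar> < 1" and m: "m \<noteq> 0"
  shows "Lc w (cm (m - 1)) - Lc w (cm m) = 2 * exp ((w + 1) * (\<i> * (of_int m * pi))) / of_int m"
  unfolding strip_step[OF w] residue_gg_ipi[OF m] using m by (simp add: field_simps)

lemma strip_step_0:
  assumes w: "\<bar>Re w\<bar> < 1"
  shows "Lc w (cm (-1)) - Lc w (cm 0) = 2 * pi * \<i> * w"
  using strip_step[OF w, of 0] by (simp add: residue_gg_0)


lemma KK_nonneg: "\<bar>a\<bar> < 1 \<Longrightarrow> KK a \<ge> 0"
  unfolding KK_def by (intro integral_nonneg exp_cosh_integrable) auto

lemma Lc_up_lim:
  assumes w: "\<bar>Re w\<bar> < 1" and i: "Im w \<ge> 0"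
  shows "(\<lambda>M. Lc w (cm (int M))) \<longlonglongrightarrow> 0"
proof (rule Lim_null_comparison)
  show "(\<lambda>M. KK (Re w) / (pi * (real M + 1/2))) \<longlonglongrightarrow> 0" by real_asymp
  show "\<forall>\<^sub>F M in sequentially. cmod (Lc w (cm (int M))) \<le> KK (Re w) / (pi * (real M + 1/2))"
  proof (intro always_eventually allI)
    fix M :: nat
    have cpos: "cm (int M) = pi * (real M + 1/2)" "cm (int M) > 0" by (auto simp: cm_def)
    have "cmod (Lc w (cm (int M))) \<le> exp (- Im w * cm (int M)) / \<bar>cm (int M)\<bar> * KK (Re w)"
      by (rule Lc_bound[OF w])
    also have "\<dots> \<le> 1 / \<bar>cm (int M)\<bar> * KK (Re w)"
      using i cpos KK_nonneg[OF w] by (intro mult_right_mono divide_right_mono) auto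
    also have "\<dots> = KK (Re w) / (pi * (real M + 1/2))" using cpos by simp
    finally show "cmod (Lc w (cm (int M))) \<le> KK (Re w) / (pi * (real M + 1/2))" .
  qed
qed

lemma Lc_down_lim:
  assumes w: "\<bar>Re w\<bar> < 1" and i: "Im w \<le> 0"
  shows "(\<lambda>M. Lc w (cm (- int M))) \<longlonglongrightarrow> 0"
proof (rule Lim_null_comparison)
  show "(\<lambda>M. KK (Re w) / (pi * (real M - 1/2))) \<longlonglongrightarrow> 0" by real_asymp
  show "\<forall>\<^sub>F M in sequentially. cmod (Lc w (cm (- int M))) \<le> KK (Re w) / (pi * (real M - 1/2))"
  proof (rule eventually_sequentiallyI[of 1])
    fix M :: nat assume M: "M \<ge> 1"
    have cneg: "\<bar>cm (- int M)\<bar> = pi * (real M - 1/2)" "cm (- int M) < 0"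
      using M pi_gt_zero by (auto simp: cm_def abs_mult mult_less_0_iff)
    have "cmod (Lc w (cm (- int M))) \<le> exp (- Im w * cm (- int M)) / \<bar>cm (- int M)\<bar> * KK (Re w)"
      by (rule Lc_bound[OF w])
    also have "\<dots> \<le> 1 / \<bar>cm (- int M)\<bar> * KK (Re w)"
      using i cneg KK_nonneg[OF w] by (intro mult_right_mono divide_right_mono) (auto simp: mult_nonpos_nonpos)
    also have "\<dots> = KK (Re w) / (pi * (real M - 1/2))" using cneg by simp
    finally show "cmod (Lc w (cm (- int M))) \<le> KK (Re w) / (pi * (real M - 1/2))" .
  qed
qed

lemma tele_up:
  assumes w: "\<bar>Re w\<bar> < 1"
  shows "Lc w (cm 0) = Lc w (cm (int M)) + (\<Sum>n<Suc M. 2 * exp ((w + 1) * (\<i> * pi)) ^ n / of_nat n)"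
proof (induction M)
  case 0
  then show ?case by simp
next
  case (Suc M)
  have "Lc w (cm (int (Suc M) - 1)) - Lc w (cm (int (Suc M)))
        = 2 * exp ((w + 1) * (\<i> * (of_int (int (Suc M)) * pi))) / of_int (int (Suc M))"
    by (rule strip_step_val[OF w]) simp
  also have "(w + 1) * (\<i> * (of_int (int (Suc M)) * pi)) = of_nat (Suc M) * ((w + 1) * (\<i> * pi))"
    by (simp add: algebra_simps)
  also have "exp (of_nat (Suc M) * ((w + 1) * (\<i> * pi))) = exp ((w + 1) * (\<i> * pi)) ^ Suc M"
    by (rule exp_of_nat_mult)
  finally have st: "Lc w (cm (int M)) = Lc w (cm (int (Suc M))) + 2 * exp ((w + 1) * (\<i> * pi)) ^ Suc M / of_nat (Suc M)"
    by (simp add: algebra_simps)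
  show ?case using Suc.IH st by (simp add: algebra_simps)
qed

lemma tele_down:
  assumes w: "\<bar>Re w\<bar> < 1"
  shows "Lc w (cm 0) = Lc w (cm (- int (Suc M))) - 2 * pi * \<i> * w
           + (\<Sum>n<Suc M. 2 * exp (- (w + 1) * (\<i> * pi)) ^ n / of_nat n)"
proof (induction M)
  case 0
  then show ?case using strip_step_0[OF w] by (simp add: algebra_simps)
next
  case (Suc M)
  define m where "m = - int (Suc M)"
  have m0: "m \<noteq> 0" unfolding m_def by simp
  have "Lc w (cm (m - 1)) - Lc w (cm m) = 2 * exp ((w + 1) * (\<i> * (of_int m * pi))) / of_int m"
    by (rule strip_step_val[OF w m0])
  also have "(w + 1) * (\<i> * (of_int m * pi)) = of_nat (Suc M) * (- (w + 1) * (\<i> * pi))"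
    by (simp add: m_def algebra_simps)
  also have "exp (of_nat (Suc M) * (- (w + 1) * (\<i> * pi))) = exp (- (w + 1) * (\<i> * pi)) ^ Suc M"
    by (rule exp_of_nat_mult)
  finally have st0: "Lc w (cm (m - 1)) - Lc w (cm m) = 2 * exp (- (w + 1) * (\<i> * pi)) ^ Suc M / of_int m" .
  have mneg: "(of_int m :: complex) = - of_nat (Suc M)" by (simp add: m_def)
  have st: "Lc w (cm m) = Lc w (cm (m - 1)) + 2 * exp (- (w + 1) * (\<i> * pi)) ^ Suc M / of_nat (Suc M)"
    using st0 unfolding mneg divide_minus_right by (simp add: algebra_simps)
  have mm: "m - 1 = - int (Suc (Suc M))" unfolding m_def by simp
  have st': "Lc w (cm (- int (Suc M))) = Lc w (cm (- int (Suc (Suc M)))) + 2 * exp (- (w + 1) * (\<i> * pi)) ^ Suc M / of_nat (Suc M)"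
    using st unfolding mm unfolding m_def .
  show ?case using Suc.IH st' by (simp add: algebra_simps)
qed

lemma log_partial_lim:
  assumes "cmod u < 1"
  shows "(\<lambda>M. \<Sum>n<Suc M. 2 * u ^ n / of_nat n) \<longlonglongrightarrow> - 2 * Ln (1 - u)"
proof -
  have "(\<lambda>n. - ((- (-u)) ^ n) / of_nat n) sums ln (1 + (-u))"
    by (rule Ln_series') (use assms in simp)
  then have "(\<lambda>n. (-2) * (- (u ^ n) / of_nat n)) sums ((-2) * Ln (1 - u))"
    by (intro sums_mult) simp
  then have "(\<lambda>n. 2 * u ^ n / of_nat n) sums (- 2 * Ln (1 - u))" by simp
  then have "(\<lambda>N. \<Sum>n<N. 2 * u ^ n / of_nat n) \<longlonglongrightarrow> - 2 * Ln (1 - u)"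
    by (simp add: sums_def)
  then show ?thesis by (rule LIMSEQ_Suc)
qed

lemma J_upper:
  assumes w: "\<bar>Re w\<bar> < 1" and i: "Im w > 0"
  shows "Lc w (cm 0) = - 2 * Ln (1 - exp ((w + 1) * (\<i> * pi)))"
proof -
  have u: "cmod (exp ((w + 1) * (\<i> * pi))) < 1" using i by simp
  have "(\<lambda>M. Lc w (cm (int M)) + (\<Sum>n<Suc M. 2 * exp ((w + 1) * (\<i> * pi)) ^ n / of_nat n))
          \<longlonglongrightarrow> 0 + - 2 * Ln (1 - exp ((w + 1) * (\<i> * pi)))"
    by (intro tendsto_intros Lc_up_lim[OF w] log_partial_lim[OF u]) (use i in auto)
  then have "(\<lambda>M. Lc w (cm 0)) \<longlonglongrightarrow> 0 + - 2 * Ln (1 - exp ((w + 1) * (\<i> * pi)))"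
    by (simp only: tele_up[OF w, symmetric])
  then show ?thesis using LIMSEQ_unique[OF tendsto_const] by simp
qed

lemma J_lower:
  assumes w: "\<bar>Re w\<bar> < 1" and i: "Im w < 0"
  shows "Lc w (cm 0) = - 2 * pi * \<i> * w - 2 * Ln (1 - exp (- (w + 1) * (\<i> * pi)))"
proof -
  have u: "cmod (exp (- (w + 1) * (\<i> * pi))) < 1" using i by (simp add: mult_less_0_iff)
  have l0: "(\<lambda>M. Lc w (cm (- int (Suc M)))) \<longlonglongrightarrow> 0"
    using LIMSEQ_Suc[OF Lc_down_lim[OF w]] i by simp
  have "(\<lambda>M. Lc w (cm (- int (Suc M))) - 2 * pi * \<i> * w
           + (\<Sum>n<Suc M. 2 * exp (- (w + 1) * (\<i> * pi)) ^ n / of_nat n))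
          \<longlonglongrightarrow> 0 - 2 * pi * \<i> * w + - 2 * Ln (1 - exp (- (w + 1) * (\<i> * pi)))"
    by (intro tendsto_intros l0 log_partial_lim[OF u])
  then have "(\<lambda>M. Lc w (cm 0)) \<longlonglongrightarrow> 0 - 2 * pi * \<i> * w + - 2 * Ln (1 - exp (- (w + 1) * (\<i> * pi)))"
    by (simp only: tele_down[OF w, symmetric])
  then show ?thesis using LIMSEQ_unique[OF tendsto_const] by simp
qed


lemma one_minus_cis_not_nonpos:
  assumes "0 < x" "x < 1"
  shows "1 - exp (2 * pi * \<i> * complex_of_real x) \<notin> \<real>\<^sub>\<le>\<^sub>0"
proof -
  have e: "exp (2 * pi * \<i> * complex_of_real x) = cis (2 * pi * x)"
    by (simp add: cis_conv_exp mult_ac)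
  have "sin (pi * x) > 0" using assms by (intro sin_gt_zero) auto
  then have "cos (2 * (pi * x)) < 1" unfolding cos_double_sin by simp
  then have "Re (1 - exp (2 * pi * \<i> * complex_of_real x)) > 0" unfolding e by (simp add: mult_ac)
  then show ?thesis by (auto simp: complex_nonpos_Reals_iff)
qed

lemma J_real_axis:
  assumes z: "0 < Re z" "Re z < 1" "Im z = 0"
  shows "Lc (2 * z - 1) (cm 0) = - 2 * Ln (1 - exp (2 * pi * \<i> * z))"
proof -
  define w where "w = 2 * z - 1"
  define zk where "zk = (\<lambda>k::nat. z + \<i> * of_real (inverse (real (Suc k))))"
  define wk where "wk = (\<lambda>k. 2 * zk k - 1)"
  have Rw: "\<bar>Re w\<bar> < 1" using z unfolding w_def by auto
  have Rwk: "Re (wk k) = Re w" for k unfolding wk_def zk_def w_def by simp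
  have Iwk: "Im (wk k) > 0" for k unfolding wk_def zk_def using z by simp
  have zk_lim: "zk \<longlonglongrightarrow> z"
  proof -
    have "(\<lambda>k. z + \<i> * of_real (inverse (real (Suc k)))) \<longlonglongrightarrow> z + \<i> * of_real 0"
      by (intro tendsto_intros LIMSEQ_inverse_real_of_nat)
    then show ?thesis unfolding zk_def by simp
  qed
  have wk_lim: "wk \<longlonglongrightarrow> w"
    unfolding wk_def w_def by (intro tendsto_intros zk_lim)
  have eqk: "Lc (wk k) (cm 0) = - 2 * Ln (1 - exp (2 * pi * \<i> * zk k))" for k
  proof -
    have "Lc (wk k) (cm 0) = - 2 * Ln (1 - exp ((wk k + 1) * (\<i> * pi)))"
      by (rule J_upper) (use Rw Rwk Iwk in auto)
    also have "(wk k + 1) * (\<i> * pi) = 2 * pi * \<i> * zk k" unfolding wk_def by (simp add: algebra_simps)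
    finally show ?thesis .
  qed
  have zre: "z = complex_of_real (Re z)" using z(3) by (simp add: complex_eq_iff)
  have nn: "1 - exp (2 * pi * \<i> * z) \<notin> \<real>\<^sub>\<le>\<^sub>0"
    using one_minus_cis_not_nonpos[OF z(1,2)] zre by metis
  have rhs_lim: "(\<lambda>k. - 2 * Ln (1 - exp (2 * pi * \<i> * zk k))) \<longlonglongrightarrow> - 2 * Ln (1 - exp (2 * pi * \<i> * z))"
    by (intro tendsto_intros zk_lim nn)
  define h where "h = (\<lambda>t. 1 / \<bar>cm 0\<bar> * (exp (Re w * t) / cosh t))"
  have lhs_lim: "(\<lambda>k. integral UNIV (\<lambda>t. gg (wk k) (Complex t (cm 0))))
                   \<longlonglongrightarrow> integral UNIV (\<lambda>t. gg w (Complex t (cm 0)))"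
  proof (rule dominated_convergence(2))
    show "(\<lambda>t. gg (wk k) (Complex t (cm 0))) integrable_on UNIV" for k
      by (rule gg_line_integrable) (use Rw Rwk in auto)
    show "h integrable_on UNIV" unfolding h_def by (intro int_cmult_real exp_cosh_integrable Rw)
    show "norm (gg (wk k) (Complex t (cm 0))) \<le> h t" for k t
    proof -
      have "norm (gg (wk k) (Complex t (cm 0))) \<le> exp (- Im (wk k) * cm 0) / \<bar>cm 0\<bar> * (exp (Re (wk k) * t) / cosh t)"
        by (rule gg_line_bound)
      also have "\<dots> = exp (- Im (wk k) * cm 0) / \<bar>cm 0\<bar> * (exp (Re w * t) / cosh t)"
        by (simp only: Rwk)
      also have "\<dots> \<le> 1 / \<bar>cm 0\<bar> * (exp (Re w * t) / cosh t)"
        using Iwk[of k] by (intro mult_right_mono divide_right_mono) (auto simp: cm0)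
      finally show ?thesis unfolding h_def .
    qed
    show "(\<lambda>k. gg (wk k) (Complex t (cm 0))) \<longlonglongrightarrow> gg w (Complex t (cm 0))" for t
      unfolding gg_def using line_ok[of t 0] by (intro tendsto_intros wk_lim) auto
  qed
  have "(\<lambda>k. Lc (wk k) (cm 0)) \<longlonglongrightarrow> Lc w (cm 0)" using lhs_lim unfolding Lc_def .
  then have "(\<lambda>k. - 2 * Ln (1 - exp (2 * pi * \<i> * zk k))) \<longlonglongrightarrow> Lc w (cm 0)" unfolding eqk .
  with rhs_lim have "Lc w (cm 0) = - 2 * Ln (1 - exp (2 * pi * \<i> * z))"
    using LIMSEQ_unique by blast
  then show ?thesis unfolding w_def .
qed

lemma J_value:
  assumes z: "0 < Re z" "Re z < 1"
  shows "Lc (2 * z - 1) (cm 0) = - 2 * L1 z"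
proof -
  have Rw: "\<bar>Re (2 * z - 1)\<bar> < 1" using z by auto
  consider "Im z > 0" | "Im z = 0" | "Im z < 0" by linarith
  then show ?thesis
  proof cases
    case 1
    have "Lc (2 * z - 1) (cm 0) = - 2 * Ln (1 - exp ((2 * z - 1 + 1) * (\<i> * pi)))"
      by (rule J_upper[OF Rw]) (use 1 in simp)
    also have "(2 * z - 1 + 1) * (\<i> * pi) = 2 * pi * \<i> * z" by (simp add: algebra_simps)
    finally show ?thesis using 1 by (simp add: L1_def)
  next
    case 2
    then show ?thesis using J_real_axis[OF z 2] by (simp add: L1_def)
  next
    case 3
    have "Lc (2 * z - 1) (cm 0) = - 2 * pi * \<i> * (2 * z - 1) - 2 * Ln (1 - exp (- (2 * z - 1 + 1) * (\<i> * pi)))"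
      by (rule J_lower[OF Rw]) (use 3 in simp)
    also have "- (2 * z - 1 + 1) * (\<i> * pi) = - 2 * pi * \<i> * z" by (simp add: algebra_simps)
    finally show ?thesis using 3 by (simp add: L1_def algebra_simps)
  qed
qed


context
  fixes \<gamma> :: complex and N :: nat
  assumes g0: "Re \<gamma> > 0" and Nbig: "real N > cmod \<gamma> / pi"
begin

lemma N_pos: "N > 0"
proof -
  have "cmod \<gamma> \<ge> 0" by simp
  then have "cmod \<gamma> / pi \<ge> 0" by simp
  with Nbig have "real N > 0" by linarith
  then show ?thesis by simp
qed

lemma gamma_small: "cmod \<gamma> / real N < pi"
  using Nbig N_pos pi_gt_zero by (simp add: field_simps)

definition OK :: "complex set" where
  "OK = {x. x \<noteq> 0 \<and> sinh x \<noteq> 0 \<and> sinh (\<gamma> * x / of_nat N) \<noteq> 0}"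

lemma TN_holo: "TN_integrand N \<gamma> z' holomorphic_on OK"
  unfolding TN_integrand_def OK_def by (auto intro!: holomorphic_intros)

lemma TN_cont: "continuous_on OK (TN_integrand N \<gamma> z')"
  by (rule holomorphic_on_imp_continuous_on[OF TN_holo])

lemma real_in_OK: "\<bar>t\<bar> \<ge> 1 \<Longrightarrow> complex_of_real t \<in> OK"
proof -
  assume t: "\<bar>t\<bar> \<ge> 1"
  have "Re (\<gamma> * complex_of_real t / of_nat N) = Re \<gamma> * t / real N" by simp
  moreover have "Re \<gamma> * t / real N \<noteq> 0" using t g0 N_pos by auto
  ultimately have "sinh (\<gamma> * complex_of_real t / of_nat N) \<noteq> 0" by (auto simp: sinh_c_eq_0)
  then show ?thesis using real_pt_ok[OF t] unfolding OK_def by auto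
qed

lemma circle_in_OK: "cmod x = 1 \<Longrightarrow> x \<in> OK"
proof -
  assume x: "cmod x = 1"
  have x0: "x \<noteq> 0" using x by auto
  have "sinh x \<noteq> 0" using Sf_nz[of x] x pi_gt3 x0 by (simp add: sinh_Sf)
  moreover have "sinh (\<gamma> * x / of_nat N) \<noteq> 0"
  proof
    assume s: "sinh (\<gamma> * x / of_nat N) = 0"
    have g0': "\<gamma> \<noteq> 0" using g0 by auto
    have "cmod (\<gamma> * x / of_nat N) = cmod \<gamma> / real N" using x by (simp add: norm_mult norm_divide)
    then have "cmod (\<gamma> * x / of_nat N) < pi" using gamma_small by simp
    then have "Sf (\<gamma> * x / of_nat N) \<noteq> 0" by (rule Sf_nz)
    moreover have "\<gamma> * x / of_nat N \<noteq> 0" using g0' x0 N_pos by simp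
    ultimately
    show False using s by (simp add: sinh_Sf)
  qed
  ultimately show ?thesis using x0 unfolding OK_def by auto
qed

lemma semicircle_OK: "path_image (part_circlepath 0 1 pi 0) \<subseteq> OK"
  using path_image_part_circlepath_subset'[of 1 0 pi 0] circle_in_OK by auto

lemma semicircle_gg: "path_image (part_circlepath 0 1 pi 0) \<subseteq> {x. x \<noteq> 0 \<and> sinh x \<noteq> 0}"
  using semicircle_OK unfolding OK_def by auto

lemma TN_diff:
  assumes x: "x \<in> OK"
  shows "TN_integrand N \<gamma> (z - \<gamma> / (2 * of_nat N)) x - TN_integrand N \<gamma> (z + \<gamma> / (2 * of_nat N)) x
           = - 2 * gg (2 * z - 1) x"
proof -
  define u where "u = \<gamma> * x / of_nat N"
  define w where "w = 2 * z - 1"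
  have Nz: "(of_nat N :: complex) \<noteq> 0" using N_pos by simp
  have a1: "(2 * (z - \<gamma> / (2 * of_nat N)) - 1) * x = w * x + (- u)"
    unfolding u_def w_def using Nz by (simp add: field_simps)
  have a2: "(2 * (z + \<gamma> / (2 * of_nat N)) - 1) * x = w * x + u"
    unfolding u_def w_def using Nz by (simp add: field_simps)
  have nz: "x \<noteq> 0" "sinh x \<noteq> 0" "sinh u \<noteq> 0" using x unfolding OK_def u_def by auto
  have "TN_integrand N \<gamma> (z - \<gamma> / (2 * of_nat N)) x - TN_integrand N \<gamma> (z + \<gamma> / (2 * of_nat N)) x
      = (exp (w * x) * exp (- u) - exp (w * x) * exp u) / (x * sinh x * sinh u)"
    unfolding TN_integrand_def a1 a2 exp_add u_def by (simp add: diff_divide_distrib)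
  also have "exp (w * x) * exp (- u) - exp (w * x) * exp u = - 2 * exp (w * x) * sinh u"
    by (simp add: sinh_field_def algebra_simps)
  also have "- 2 * exp (w * x) * sinh u / (x * sinh x * sinh u) = - 2 * gg w x"
    using nz by (simp add: gg_def field_simps)
  finally show ?thesis unfolding w_def .
qed

definition kap :: real where "kap = (1 - exp (- 2 * (Re \<gamma> / real N))) / 2"

lemma kap_pos: "kap > 0"
proof -
  have "Re \<gamma> / real N > 0" using g0 N_pos by simp
  then have "exp (- 2 * (Re \<gamma> / real N)) < 1" by simp
  then show ?thesis unfolding kap_def by simp
qed

lemma sinh_lower:
  assumes "s \<ge> Re \<gamma> / real N"
  shows "sinh s \<ge> kap * exp s"
proof -
  have "exp (-2 * s) \<le> exp (- 2 * (Re \<gamma> / real N))" using assms by simp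
  moreover have "exp (-s) = exp (-2 * s) * exp s" by (simp add: exp_add[symmetric])
  ultimately have "exp (-s) \<le> exp (- 2 * (Re \<gamma> / real N)) * exp s"
    by (simp add: mult_right_mono)
  then show ?thesis unfolding kap_def sinh_def by (simp add: field_simps)
qed

lemma TN_real_bound:
  assumes t: "\<bar>t\<bar> \<ge> 1" and A: "\<bar>Re (2 * z' - 1)\<bar> \<le> A + Re \<gamma> / real N"
  shows "cmod (TN_integrand N \<gamma> z' (of_real t)) \<le> 4 / kap * exp ((A - 1) * \<bar>t\<bar>)"
proof -
  define r where "r = Re \<gamma> / real N"
  have r: "r > 0" unfolding r_def using g0 N_pos by simp
  have num: "cmod (exp ((2 * z' - 1) * of_real t)) \<le> exp ((A + r) * \<bar>t\<bar>)"
  proof -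
    have "Re (2 * z' - 1) * t \<le> \<bar>Re (2 * z' - 1)\<bar> * \<bar>t\<bar>"
      by (metis abs_ge_self abs_mult)
    also have "\<dots> \<le> (A + r) * \<bar>t\<bar>" using A unfolding r_def by (intro mult_right_mono) auto
    finally show ?thesis by simp
  qed
  have d2: "cmod (sinh (complex_of_real t)) \<ge> exp \<bar>t\<bar> / 4"
  proof -
    have "sinh \<bar>t\<bar> \<ge> exp \<bar>t\<bar> / 4" using sinh_ge_exp4 t by blast
    moreover have "\<bar>sinh (Re (complex_of_real t))\<bar> \<le> cmod (sinh (complex_of_real t))" by (rule sinh_Re_le)
    ultimately show ?thesis by simp
  qed
  have d3: "cmod (sinh (\<gamma> * complex_of_real t / of_nat N)) \<ge> kap * exp (r * \<bar>t\<bar>)"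
  proof -
    have "Re (\<gamma> * complex_of_real t / of_nat N) = r * t" unfolding r_def by simp
    then have "\<bar>sinh (r * t)\<bar> \<le> cmod (sinh (\<gamma> * complex_of_real t / of_nat N))"
      using sinh_Re_le[of "\<gamma> * complex_of_real t / of_nat N"] by simp
    moreover have "\<bar>sinh (r * t)\<bar> = sinh (r * \<bar>t\<bar>)"
      using r by (simp add: abs_mult flip: sinh_real_abs)
    moreover have "sinh (r * \<bar>t\<bar>) \<ge> kap * exp (r * \<bar>t\<bar>)"
      using r t unfolding r_def[symmetric] by (intro sinh_lower) (simp add: r_def[symmetric] mult_le_cancel_left1)
    ultimately show ?thesis by simp
  qed
  have "cmod (TN_integrand N \<gamma> z' (of_real t))
      = cmod (exp ((2 * z' - 1) * of_real t)) / (\<bar>t\<bar> * cmod (sinh (complex_of_real t)) * cmod (sinh (\<gamma> * complex_of_real t / of_nat N)))"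
    by (simp add: TN_integrand_def norm_divide norm_mult)
  also have "\<dots> \<le> exp ((A + r) * \<bar>t\<bar>) / (1 * (exp \<bar>t\<bar> / 4) * (kap * exp (r * \<bar>t\<bar>)))"
    using num d2 d3 t kap_pos by (intro frac_le mult_mono) auto
  also have "\<dots> = 4 / kap * exp ((A - 1) * \<bar>t\<bar>)"
    using kap_pos by (simp add: exp_add[symmetric] exp_diff[symmetric] field_simps)
  finally show ?thesis .
qed

lemma TN_real_integrable:
  assumes A: "\<bar>Re (2 * z' - 1)\<bar> \<le> A + Re \<gamma> / real N" "A < 1" and S: "S = {1..} \<or> S = {..-1}"
  shows "(\<lambda>t. TN_integrand N \<gamma> z' (of_real t)) integrable_on S"
proof (rule integrable_by_bound)
  have S1: "\<And>t. t \<in> S \<Longrightarrow> \<bar>t\<bar> \<ge> 1" using S by auto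
  show "continuous_on S (\<lambda>t. TN_integrand N \<gamma> z' (complex_of_real t))"
    by (rule continuous_on_compose2[OF TN_cont]) (use S1 real_in_OK in \<open>auto intro!: continuous_intros\<close>)
  show "S \<in> sets lebesgue" using S by auto
  have d: "1 - A > 0" using A(2) by simp
  have "(\<lambda>t. exp (-(1 - A) * \<bar>t\<bar>)) integrable_on S"
    using S exp_abs_integrable_ge1[OF d] exp_abs_integrable_le1[OF d] by (elim disjE) simp_all
  then show "(\<lambda>t. 4 / kap * exp (-(1 - A) * \<bar>t\<bar>)) integrable_on S"
    by (rule int_cmult_real)
  show "cmod (TN_integrand N \<gamma> z' (complex_of_real t)) \<le> 4 / kap * exp (-(1 - A) * \<bar>t\<bar>)" if "t \<in> S" for t
    using TN_real_bound[OF S1[OF that] A(1)] by simp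
qed

end


context
  fixes \<gamma> :: complex and N :: nat
  assumes g0: "Re \<gamma> > 0" and Nbig: "real N > cmod \<gamma> / pi"
begin

lemma main_ctx:
  assumes z: "0 < Re z" "Re z < 1"
  shows "T_N N \<gamma> (z - \<gamma> / (2 * of_nat N)) - T_N N \<gamma> (z + \<gamma> / (2 * of_nat N)) = L1 z"
proof -
  define w where "w = 2 * z - 1"
  define z1 where "z1 = z - \<gamma> / (2 * of_nat N)"
  define z2 where "z2 = z + \<gamma> / (2 * of_nat N)"
  have Rw: "\<bar>Re w\<bar> < 1" using z unfolding w_def by auto
  have Npos: "N > 0" by (rule N_pos[OF g0 Nbig])
  have Re1: "Re (2 * z1 - 1) = Re w - Re \<gamma> / real N" unfolding z1_def w_def using Npos by simp
  have Re2: "Re (2 * z2 - 1) = Re w + Re \<gamma> / real N" unfolding z2_def w_def using Npos by simp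
  have rpos: "Re \<gamma> / real N > 0" using g0 Npos by simp
  have A1: "\<bar>Re (2 * z1 - 1)\<bar> \<le> \<bar>Re w\<bar> + Re \<gamma> / real N" unfolding Re1 using rpos by linarith
  have A2: "\<bar>Re (2 * z2 - 1)\<bar> \<le> \<bar>Re w\<bar> + Re \<gamma> / real N" unfolding Re2 using rpos by linarith
  have intA: "(\<lambda>t. TN_integrand N \<gamma> z1 (of_real t)) integrable_on S"
    and intB: "(\<lambda>t. TN_integrand N \<gamma> z2 (of_real t)) integrable_on S"
    if "S = {1..} \<or> S = {..-1}" for S
    using TN_real_integrable[OF g0 Nbig A1 Rw that] TN_real_integrable[OF g0 Nbig A2 Rw that] by auto
  have Dreal: "TN_integrand N \<gamma> z1 (of_real t) - TN_integrand N \<gamma> z2 (of_real t) = - 2 * gg w (of_real t)"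
    if "t \<in> S" "S = {1..} \<or> S = {..-1}" for t S
  proof -
    have "\<bar>t\<bar> \<ge> 1" using that by auto
    then show ?thesis unfolding z1_def z2_def w_def
      by (intro TN_diff[OF g0 Nbig] real_in_OK[OF g0 Nbig])
  qed
  have Ireal: "integral S (\<lambda>t. TN_integrand N \<gamma> z1 (of_real t)) - integral S (\<lambda>t. TN_integrand N \<gamma> z2 (of_real t))
        = - 2 * integral S (\<lambda>t. gg w (of_real t))" if S: "S = {1..} \<or> S = {..-1}" for S
  proof -
    have "integral S (\<lambda>t. TN_integrand N \<gamma> z1 (of_real t)) - integral S (\<lambda>t. TN_integrand N \<gamma> z2 (of_real t))
        = integral S (\<lambda>t. TN_integrand N \<gamma> z1 (of_real t) - TN_integrand N \<gamma> z2 (of_real t))"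
      by (rule integral_diff[symmetric]) (use intA[OF S] intB[OF S] in auto)
    also have "\<dots> = integral S (\<lambda>t. - 2 * gg w (of_real t))"
      by (rule integral_cong) (rule Dreal[OF _ S])
    also have "\<dots> = - 2 * integral S (\<lambda>t. gg w (of_real t))" by (rule integral_mult_right)
    finally show ?thesis .
  qed
  define sc where "sc = part_circlepath 0 1 pi 0"
  have ciA: "TN_integrand N \<gamma> z1 contour_integrable_on sc"
    unfolding sc_def by (intro contour_integrable_continuous_part_circlepath
        continuous_on_subset[OF TN_cont[OF g0 Nbig] semicircle_OK[OF g0 Nbig]])
  have ciB: "TN_integrand N \<gamma> z2 contour_integrable_on sc"
    unfolding sc_def by (intro contour_integrable_continuous_part_circlepath
        continuous_on_subset[OF TN_cont[OF g0 Nbig] semicircle_OK[OF g0 Nbig]])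
  have ciG: "gg w contour_integrable_on sc"
    unfolding sc_def by (intro contour_integrable_continuous_part_circlepath gg_cont_on)
       (use semicircle_gg[OF g0 Nbig] in auto)
  have Csc: "contour_integral sc (TN_integrand N \<gamma> z1) - contour_integral sc (TN_integrand N \<gamma> z2)
       = - 2 * contour_integral sc (gg w)"
  proof -
    have "contour_integral sc (TN_integrand N \<gamma> z1) - contour_integral sc (TN_integrand N \<gamma> z2)
        = contour_integral sc (\<lambda>x. TN_integrand N \<gamma> z1 x - TN_integrand N \<gamma> z2 x)"
      by (rule contour_integral_diff[symmetric, OF ciA ciB])
    also have "\<dots> = contour_integral sc (\<lambda>x. - 2 * gg w x)"
    proof (rule contour_integral_eq)
      fix x assume "x \<in> path_image sc"
      then have "x \<in> OK \<gamma> N" using semicircle_OK[OF g0 Nbig] unfolding sc_def by auto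
      then show "TN_integrand N \<gamma> z1 x - TN_integrand N \<gamma> z2 x = - 2 * gg w x"
        unfolding z1_def z2_def w_def by (rule TN_diff[OF g0 Nbig])
    qed
    also have "\<dots> = - 2 * contour_integral sc (gg w)" by (rule contour_integral_lmul[OF ciG])
    finally show ?thesis .
  qed
  have "T_N N \<gamma> z1 - T_N N \<gamma> z2 = (1/4) *
      ((integral {..-1} (\<lambda>t. TN_integrand N \<gamma> z1 (of_real t)) - integral {..-1} (\<lambda>t. TN_integrand N \<gamma> z2 (of_real t)))
       + (contour_integral sc (TN_integrand N \<gamma> z1) - contour_integral sc (TN_integrand N \<gamma> z2))
       + (integral {1..} (\<lambda>t. TN_integrand N \<gamma> z1 (of_real t)) - integral {1..} (\<lambda>t. TN_integrand N \<gamma> z2 (of_real t))))"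
    unfolding T_N_def sc_def by (simp add: algebra_simps)
  also have "\<dots> = (1/4) * (- 2) * (integral {..-1} (\<lambda>t. gg w (of_real t)) + contour_integral sc (gg w)
       + integral {1..} (\<lambda>t. gg w (of_real t)))"
    unfolding Ireal[of "{..-1}", simplified] Ireal[of "{1..}", simplified] Csc by (simp add: algebra_simps)
  also have "integral {..-1} (\<lambda>t. gg w (of_real t)) + contour_integral sc (gg w)
       + integral {1..} (\<lambda>t. gg w (of_real t)) = Lc w (cm 0)"
    unfolding sc_def by (rule J_eq_line[OF Rw])
  also have "Lc w (cm 0) = - 2 * L1 z" unfolding w_def by (rule J_value[OF z])
  finally show ?thesis unfolding z1_def z2_def by simp
qed

end

theorem lemma2p10:
  fixes \<gamma> z :: complex and N :: nat
  assumes "Re \<gamma> > 0" and "Im \<gamma> < 0"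
    and "real N > cmod \<gamma> / pi"
    and "0 < Re z" and "Re z < 1"
  shows "T_N N \<gamma> (z - \<gamma> / (2 * of_nat N)) - T_N N \<gamma> (z + \<gamma> / (2 * of_nat N)) = L1 z"
  by (rule main_ctx[OF assms(1,3,4,5)])


end
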